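(* If a finite-dimensional algebra $\Lambda$ is hom-irreducible, then $\Lambda$ is ext-irreducible.
   Context: $\Bbbk$ is algebraically closed. Let $\Lambda=\Bbbk Q/I$ be the path algebra of a bound quiver (for an arbitrary finite-dimensional algebra the notions are taken for a Morita-equivalent bound quiver algebra). $\mathrm{rep}_\Lambda(\mathbf d)$ is the variety of representations $V=(V_\alpha)_{\alpha\in Q_1}$, $V_\alpha\in M_{d_{t\alpha}\times d_{s\alpha}}(\Bbbk)$, satisfying the relations in $I$. Hom-irreducibility: $\mathcal H_\Lambda(\mathbf e,\mathbf d)$ is the variety of triples $(V,W,f)$ with $V\in\mathrm{rep}_\Lambda(\mathbf e)$, $W\in\mathrm{rep}_\Lambda(\mathbf d)$ and $f=(f_x)$, $f_x\in M_{d_x\times e_x}(\Bbbk)$, with $W_\alpha f_{s\alpha}=f_{t\alpha}V_\alpha$ for all $\alpha$; $\Lambda$ is hom-irreducible if all $\mathcal H_\Lambda(\mathbf e,\mathbf d)$ are irreducible. Ext-irreducibility: for $V\in\mathrm{rep}_\Lambda(\mathbf d)$, $U\in\mathrm{rep}_\Lambda(\mathbf e)$, $Z=(Z_\alpha)$ with $Z_\alpha\in M_{d_{t\alpha}\times e_{s\alpha}}(\Bbbk)$, let $W^{V,Z,U}_\alpha=\begin{pmatrix}V_\alpha&Z_\alpha\\0&U_\alpha\end{pmatrix}$ and $\mathbb Z^{U,V}$ the set of $Z$ for which $W^{V,Z,U}$ satisfies the relations of $I$. $\mathcal E_\Lambda(\mathbf e,\mathbf d)$ is the variety of triples $(U,V,Z)$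 with $U\in\mathrm{rep}_\Lambda(\mathbf e)$, $V\in\mathrm{rep}_\Lambda(\mathbf d)$, $Z\in\mathbb Z^{U,V}$; $\Lambda$ is ext-irreducible if all $\mathcal E_\Lambda(\mathbf e,\mathbf d)$ are irreducible. *)

theory Defs
  imports "Jordan_Normal_Form.Matrix" "HOL-Computational_Algebra.Polynomial"
begin

definition alg_closed :: "'k::field itself \<Rightarrow> bool" where
  "alg_closed _ \<longleftrightarrow> (\<forall>p :: 'k poly. degree p \<ge> 1 \<longrightarrow> (\<exists>x. poly p x = 0))"

inductive_set poly_funs :: "('p \<Rightarrow> 'k::comm_ring_1) set \<Rightarrow> ('p \<Rightarrow> 'k) set"
  for C :: "('p \<Rightarrow> 'k) set" where
  const: "(\<lambda>_. c) \<in> poly_funs C"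
| coord: "g \<in> C \<Longrightarrow> g \<in> poly_funs C"
| add: "g \<in> poly_funs C \<Longrightarrow> h \<in> poly_funs C \<Longrightarrow> (\<lambda>p. g p + h p) \<in> poly_funs C"
| mult: "g \<in> poly_funs C \<Longrightarrow> h \<in> poly_funs C \<Longrightarrow> (\<lambda>p. g p * h p) \<in> poly_funs C"

definition zariski_closed :: "('p \<Rightarrow> 'k::comm_ring_1) set \<Rightarrow> 'p set \<Rightarrow> bool" where
  "zariski_closed C Z \<longleftrightarrow> (\<exists>F \<subseteq> poly_funs C. Z = {p. \<forall>g\<in>F. g p = 0})"

definition irreducible_var :: "('p \<Rightarrow> 'k::comm_ring_1) set \<Rightarrow> 'p set \<Rightarrow> bool" where
  "irreducible_var C X \<longleftrightarrow> X \<noteq> {} \<and>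
     (\<forall>Z1 Z2. zariski_closed C Z1 \<and> zariski_closed C Z2 \<and> X \<subseteq> Z1 \<union> Z2
        \<longrightarrow> X \<subseteq> Z1 \<or> X \<subseteq> Z2)"

text \<open>Vertices are 0..<nverts, arrows are 0..<narrs.\<close>
record quiver =
  nverts :: nat
  narrs :: nat
  src :: "nat \<Rightarrow> nat"
  tgt :: "nat \<Rightarrow> nat"

definition wf_quiver :: "quiver \<Rightarrow> bool" where
  "wf_quiver Q \<longleftrightarrow> (\<forall>a<narrs Q. src Q a < nverts Q \<and> tgt Q a < nverts Q)"

text \<open>A path is (start vertex, list of arrows in order of traversal); (x,[]) is e_x.\<close>
type_synonym path = "nat \<times> nat list"

fun chain_ok :: "quiver \<Rightarrow> nat \<Rightarrow> nat list \<Rightarrow> bool" where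
  "chain_ok Q x [] = True"
| "chain_ok Q x (a # as) = (a < narrs Q \<and> src Q a = x \<and> chain_ok Q (tgt Q a) as)"

definition is_path :: "quiver \<Rightarrow> path \<Rightarrow> bool" where
  "is_path Q p \<longleftrightarrow> fst p < nverts Q \<and> chain_ok Q (fst p) (snd p)"

fun pend :: "quiver \<Rightarrow> nat \<Rightarrow> nat list \<Rightarrow> nat" where
  "pend Q x [] = x"
| "pend Q x (a # as) = pend Q (tgt Q a) as"

text \<open>Elements of the path algebra kQ: finitely supported linear combinations of paths.\<close>
definition in_kQ :: "quiver \<Rightarrow> (path \<Rightarrow> 'k::field) \<Rightarrow> bool" where
  "in_kQ Q f \<longleftrightarrow> finite {p. f p \<noteq> 0} \<and> (\<forall>p. f p \<noteq> 0 \<longrightarrow> is_path Q p)"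

text \<open>Multiplication (concatenation of paths, first factor traversed first).\<close>
definition kq_mult :: "quiver \<Rightarrow> (path \<Rightarrow> 'k::field) \<Rightarrow> (path \<Rightarrow> 'k) \<Rightarrow> (path \<Rightarrow> 'k)" where
  "kq_mult Q f g = (\<lambda>(x, cs). \<Sum>i\<le>length cs.
      f (x, take i cs) * g (pend Q x (take i cs), drop i cs))"

definition kq_ideal :: "quiver \<Rightarrow> ((path \<Rightarrow> 'k::field) set) \<Rightarrow> bool" where
  "kq_ideal Q I \<longleftrightarrow> I \<subseteq> {f. in_kQ Q f} \<and> (\<lambda>_. 0) \<in> I
     \<and> (\<forall>f\<in>I. \<forall>g\<in>I. (\<lambda>p. f p + g p) \<in> I)
     \<and> (\<forall>c. \<forall>f\<in>I. (\<lambda>p. c * f p) \<in> I)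
     \<and> (\<forall>f\<in>I. \<forall>g. in_kQ Q g \<longrightarrow> kq_mult Q g f \<in> I \<and> kq_mult Q f g \<in> I)"

text \<open>R^m = span of paths of length at least m (R the arrow ideal).\<close>
definition arrow_ideal_pow :: "quiver \<Rightarrow> nat \<Rightarrow> (path \<Rightarrow> 'k::field) set" where
  "arrow_ideal_pow Q m = {f. in_kQ Q f \<and> (\<forall>p. f p \<noteq> 0 \<longrightarrow> length (snd p) \<ge> m)}"

definition admissible :: "quiver \<Rightarrow> (path \<Rightarrow> 'k::field) set \<Rightarrow> bool" where
  "admissible Q I \<longleftrightarrow> kq_ideal Q I \<and> (\<exists>m\<ge>2. arrow_ideal_pow Q m \<subseteq> I)
     \<and> I \<subseteq> arrow_ideal_pow Q 2"

text \<open>Matrix of a path: V_{a_k} ... V_{a_1} for the path a_1, ..., a_k.\<close>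
fun pathmat :: "quiver \<Rightarrow> (nat \<Rightarrow> nat) \<Rightarrow> (nat \<Rightarrow> 'k::field mat) \<Rightarrow> nat \<Rightarrow> nat list \<Rightarrow> 'k mat" where
  "pathmat Q d V x [] = 1\<^sub>m (d x)"
| "pathmat Q d V x (a # as) = pathmat Q d V (tgt Q a) as * V a"

definition satisfies_rels :: "quiver \<Rightarrow> (path \<Rightarrow> 'k::field) set \<Rightarrow> (nat \<Rightarrow> nat) \<Rightarrow> (nat \<Rightarrow> 'k mat) \<Rightarrow> bool" where
  "satisfies_rels Q I d V \<longleftrightarrow> (\<forall>\<rho>\<in>I. \<forall>x<nverts Q. \<forall>y<nverts Q. \<forall>i<d y. \<forall>j<d x.
     (\<Sum>p\<in>{p. \<rho> p \<noteq> 0 \<and> fst p = x \<and> pend Q x (snd p) = y}.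
        \<rho> p * (pathmat Q d V x (snd p) $$ (i, j))) = 0)"

definition is_rep :: "quiver \<Rightarrow> (path \<Rightarrow> 'k::field) set \<Rightarrow> (nat \<Rightarrow> nat) \<Rightarrow> (nat \<Rightarrow> 'k mat) \<Rightarrow> bool" where
  "is_rep Q I d V \<longleftrightarrow> (\<forall>a<narrs Q. V a \<in> carrier_mat (d (tgt Q a)) (d (src Q a)))
     \<and> satisfies_rels Q I d V"

definition arrow_coords :: "quiver \<Rightarrow> (nat \<Rightarrow> nat) \<Rightarrow> (nat \<Rightarrow> nat) \<Rightarrow> ('p \<Rightarrow> (nat \<Rightarrow> 'k mat)) \<Rightarrow> ('p \<Rightarrow> 'k) set" where
  "arrow_coords Q r c sel = {(\<lambda>P. sel P a $$ (i, j)) | a i j. a < narrs Q \<and> i < r (tgt Q a) \<and> j < c (src Q a)}"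

definition vertex_coords :: "quiver \<Rightarrow> (nat \<Rightarrow> nat) \<Rightarrow> (nat \<Rightarrow> nat) \<Rightarrow> ('p \<Rightarrow> (nat \<Rightarrow> 'k mat)) \<Rightarrow> ('p \<Rightarrow> 'k) set" where
  "vertex_coords Q r c sel = {(\<lambda>P. sel P x $$ (i, j)) | x i j. x < nverts Q \<and> i < r x \<and> j < c x}"

type_synonym 'k triple = "(nat \<Rightarrow> 'k mat) \<times> (nat \<Rightarrow> 'k mat) \<times> (nat \<Rightarrow> 'k mat)"

text \<open>H(e,d): triples (V,W,f), V in rep(e), W in rep(d), f : V \<rightarrow> W a homomorphism.\<close>
definition hom_var :: "quiver \<Rightarrow> (path \<Rightarrow> 'k::field) set \<Rightarrow> (nat \<Rightarrow> nat) \<Rightarrow> (nat \<Rightarrow> nat) \<Rightarrow> 'k triple set" where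
  "hom_var Q I e d = {(V, W, f). is_rep Q I e V \<and> is_rep Q I d W
     \<and> (\<forall>x<nverts Q. f x \<in> carrier_mat (d x) (e x))
     \<and> (\<forall>a<narrs Q. W a * f (src Q a) = f (tgt Q a) * V a)}"

definition hom_coords :: "quiver \<Rightarrow> (nat \<Rightarrow> nat) \<Rightarrow> (nat \<Rightarrow> nat) \<Rightarrow> ('k::field triple \<Rightarrow> 'k) set" where
  "hom_coords Q e d = arrow_coords Q e e fst \<union> arrow_coords Q d d (fst \<circ> snd)
     \<union> vertex_coords Q d e (snd \<circ> snd)"

definition hom_irreducible :: "quiver \<Rightarrow> (path \<Rightarrow> 'k::field) set \<Rightarrow> bool" where
  "hom_irreducible Q I \<longleftrightarrow> (\<forall>e d. irreducible_var (hom_coords Q e d) (hom_var Q I e d))"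

definition block_rep :: "quiver \<Rightarrow> (nat \<Rightarrow> nat) \<Rightarrow> (nat \<Rightarrow> nat) \<Rightarrow> (nat \<Rightarrow> 'k::field mat) \<Rightarrow> (nat \<Rightarrow> 'k mat) \<Rightarrow> (nat \<Rightarrow> 'k mat) \<Rightarrow> (nat \<Rightarrow> 'k mat)" where
  "block_rep Q e d V Z U = (\<lambda>a. four_block_mat (V a) (Z a) (0\<^sub>m (e (tgt Q a)) (d (src Q a))) (U a))"

text \<open>E(e,d): triples (U,V,Z), U in rep(e), V in rep(d), Z in Z^{U,V}.\<close>
definition ext_var :: "quiver \<Rightarrow> (path \<Rightarrow> 'k::field) set \<Rightarrow> (nat \<Rightarrow> nat) \<Rightarrow> (nat \<Rightarrow> nat) \<Rightarrow> 'k triple set" where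
  "ext_var Q I e d = {(U, V, Z). is_rep Q I e U \<and> is_rep Q I d V
     \<and> (\<forall>a<narrs Q. Z a \<in> carrier_mat (d (tgt Q a)) (e (src Q a)))
     \<and> satisfies_rels Q I (\<lambda>x. d x + e x) (block_rep Q e d V Z U)}"

definition ext_coords :: "quiver \<Rightarrow> (nat \<Rightarrow> nat) \<Rightarrow> (nat \<Rightarrow> nat) \<Rightarrow> ('k::field triple \<Rightarrow> 'k) set" where
  "ext_coords Q e d = arrow_coords Q e e fst \<union> arrow_coords Q d d (fst \<circ> snd)
     \<union> arrow_coords Q d e (snd \<circ> snd)"

definition ext_irreducible :: "quiver \<Rightarrow> (path \<Rightarrow> 'k::field) set \<Rightarrow> bool" where
  "ext_irreducible Q I \<longleftrightarrow> (\<forall>e d. irreducible_var (ext_coords Q e d) (ext_var Q I e d))"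

end

theory Submission
  imports Defs "Jordan_Normal_Form.Determinant"
begin

lemma pf_sum:
  assumes "finite A" "\<And>i. i \<in> A \<Longrightarrow> h i \<in> poly_funs C"
  shows "(\<lambda>p. \<Sum>i\<in>A. h i p) \<in> poly_funs C"
  using assms
proof (induction A rule: finite_induct)
  case empty
  then show ?case using poly_funs.const[of 0 C] by simp
next
  case (insert x F)
  have "(\<lambda>p. h x p + (\<Sum>i\<in>F. h i p)) \<in> poly_funs C"
    by (rule poly_funs.add) (use insert in auto)
  then show ?case using insert by simp
qed

lemma pf_prod:
  assumes "finite A" "\<And>i. i \<in> A \<Longrightarrow> h i \<in> poly_funs C"
  shows "(\<lambda>p. \<Prod>i\<in>A. h i p) \<in> poly_funs C"
  using assms
proof (induction A rule: finite_induct)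
  case empty
  then show ?case using poly_funs.const[of 1 C] by simp
next
  case (insert x F)
  have "(\<lambda>p. h x p * (\<Prod>i\<in>F. h i p)) \<in> poly_funs C"
    by (rule poly_funs.mult) (use insert in auto)
  then show ?case using insert by simp
qed

lemma pf_cmult: "g \<in> poly_funs C \<Longrightarrow> (\<lambda>p. c * g p) \<in> poly_funs C"
  using poly_funs.mult[OF poly_funs.const[of c]] by blast

lemma pf_uminus: "g \<in> poly_funs C \<Longrightarrow> (\<lambda>p. - g p) \<in> poly_funs C"
  using pf_cmult[of g C "-1"] by simp

lemma pf_diff: "g \<in> poly_funs C \<Longrightarrow> h \<in> poly_funs C \<Longrightarrow> (\<lambda>p. g p - h p) \<in> poly_funs C"
  using poly_funs.add[OF _ pf_uminus[of h]] by (simp add: algebra_simps)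

lemma pf_power: "g \<in> poly_funs C \<Longrightarrow> (\<lambda>p. g p ^ n) \<in> poly_funs C"
  using pf_prod[of "{..<n}" "\<lambda>_. g" C] by simp

lemma pf_coords_eq:
  assumes "g \<in> poly_funs C" "\<And>c. c \<in> C \<Longrightarrow> c x = c y"
  shows "g x = g y"
  using assms(1) by induction (use assms(2) in auto)

lemma pf_pullback:
  fixes D :: "'q \<Rightarrow> 'k::field"
  assumes "g \<in> poly_funs C"
    and "\<And>c. c \<in> C \<Longrightarrow> \<exists>P\<in>poly_funs C'. \<forall>p. D p \<noteq> 0 \<longrightarrow> P p = D p * c (\<psi> p)"
    and "D \<in> poly_funs C'"
  shows "\<exists>n. \<exists>P\<in>poly_funs C'. \<forall>p. D p \<noteq> 0 \<longrightarrow> P p = D p ^ n * g (\<psi> p)"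
  using assms(1)
proof induction
  case (const c)
  show ?case by (rule exI[of _ 0], rule bexI[of _ "\<lambda>_. c"]) (auto intro: poly_funs.const)
next
  case (coord g)
  then show ?case using assms(2)[OF coord] by (metis power_one_right)
next
  case (add g h)
  from add.IH obtain n1 P1 n2 P2 where P1: "P1 \<in> poly_funs C'" "\<forall>p. D p \<noteq> 0 \<longrightarrow> P1 p = D p ^ n1 * g (\<psi> p)"
    and P2: "P2 \<in> poly_funs C'" "\<forall>p. D p \<noteq> 0 \<longrightarrow> P2 p = D p ^ n2 * h (\<psi> p)" by blast
  let ?P = "\<lambda>p. D p ^ n2 * P1 p + D p ^ n1 * P2 p"
  have "?P \<in> poly_funs C'"
    by (intro poly_funs.add poly_funs.mult pf_power assms(3) P1 P2)
  moreover have "\<forall>p. D p \<noteq> 0 \<longrightarrow> ?P p = D p ^ (n1 + n2) * (g (\<psi> p) + h (\<psi> p))"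
    using P1 P2 by (auto simp: algebra_simps power_add)
  ultimately show ?case by (intro exI[of _ "n1+n2"] bexI[of _ ?P])
next
  case (mult g h)
  from mult.IH obtain n1 P1 n2 P2 where P1: "P1 \<in> poly_funs C'" "\<forall>p. D p \<noteq> 0 \<longrightarrow> P1 p = D p ^ n1 * g (\<psi> p)"
    and P2: "P2 \<in> poly_funs C'" "\<forall>p. D p \<noteq> 0 \<longrightarrow> P2 p = D p ^ n2 * h (\<psi> p)" by blast
  let ?P = "\<lambda>p. P1 p * P2 p"
  have "?P \<in> poly_funs C'"
    by (intro poly_funs.mult P1 P2)
  moreover have "\<forall>p. D p \<noteq> 0 \<longrightarrow> ?P p = D p ^ (n1 + n2) * (g (\<psi> p) * h (\<psi> p))"
    using P1 P2 by (auto simp: algebra_simps power_add)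
  ultimately show ?case by (intro exI[of _ "n1+n2"] bexI[of _ ?P])
qed

definition pm :: "('p \<Rightarrow> 'k::comm_ring_1) set \<Rightarrow> nat \<Rightarrow> nat \<Rightarrow> ('p \<Rightarrow> 'k mat) \<Rightarrow> bool" where
  "pm C n m M \<longleftrightarrow> (\<forall>p. M p \<in> carrier_mat n m) \<and> (\<forall>i<n. \<forall>j<m. (\<lambda>p. M p $$ (i,j)) \<in> poly_funs C)"

lemma pmD: "pm C n m M \<Longrightarrow> i < n \<Longrightarrow> j < m \<Longrightarrow> (\<lambda>p. M p $$ (i,j)) \<in> poly_funs C"
  "pm C n m M \<Longrightarrow> M p \<in> carrier_mat n m"
  unfolding pm_def by auto

lemma pm_mult:
  assumes "pm C n k M" "pm C k m N"
  shows "pm C n m (\<lambda>p. M p * N p)"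
  unfolding pm_def
proof (intro conjI allI impI)
  fix p show "M p * N p \<in> carrier_mat n m" using pmD(2)[OF assms(1), of p] pmD(2)[OF assms(2), of p] by (rule mult_carrier_mat)
next
  fix i j assume ij: "i < n" "j < m"
  have "(\<lambda>p. (M p * N p) $$ (i,j)) = (\<lambda>p. \<Sum>l\<in>{0..<k}. M p $$ (i,l) * N p $$ (l,j))"
  proof
    fix p
    have c: "M p \<in> carrier_mat n k" "N p \<in> carrier_mat k m" using pmD(2)[OF assms(1)] pmD(2)[OF assms(2)] by auto
    show "(M p * N p) $$ (i,j) = (\<Sum>l\<in>{0..<k}. M p $$ (i,l) * N p $$ (l,j))"
      using c ij by (auto simp: scalar_prod_def intro!: sum.cong)
  qed
  also have "\<dots> \<in> poly_funs C"
    by (intro pf_sum poly_funs.mult pmD[OF assms(1)] pmD[OF assms(2)]) (use ij in auto)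
  finally show "(\<lambda>p. (M p * N p) $$ (i,j)) \<in> poly_funs C" .
qed

lemma pm_det:
  assumes "pm C n n M"
  shows "(\<lambda>p. det (M p)) \<in> poly_funs C"
proof -
  have "(\<lambda>p. det (M p)) = (\<lambda>p. \<Sum>\<pi>\<in>{\<pi>. \<pi> permutes {0..<n}}. signof \<pi> * (\<Prod>i = 0..<n. M p $$ (i, \<pi> i)))"
    using pmD(2)[OF assms] by (auto simp: det_def')
  also have "\<dots> \<in> poly_funs C"
  proof (intro pf_sum pf_cmult pf_prod)
    show "finite {\<pi>. \<pi> permutes {0..<n}}" by (simp add: finite_permutations)
  next
    fix \<pi> i assume "\<pi> \<in> {\<pi>. \<pi> permutes {0..<n}}" "i \<in> {0..<n}"
    then show "(\<lambda>p. M p $$ (i, \<pi> i)) \<in> poly_funs C"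
      by (intro pmD[OF assms]) (auto simp: permutes_in_image)
  qed simp
  finally show ?thesis .
qed

lemma pm_mat_delete:
  assumes "pm C (Suc n) (Suc n) M" "i < Suc n" "j < Suc n"
  shows "pm C n n (\<lambda>p. mat_delete (M p) i j)"
  unfolding pm_def
proof (intro conjI allI impI)
  fix p show "mat_delete (M p) i j \<in> carrier_mat n n"
    using mat_delete_carrier[OF pmD(2)[OF assms(1), of p]] by simp
next
  fix a b assume ab: "a < n" "b < n"
  have "(\<lambda>p. mat_delete (M p) i j $$ (a,b)) = (\<lambda>p. M p $$ (if a < i then a else Suc a, if b < j then b else Suc b))"
  proof
    fix p have "M p \<in> carrier_mat (Suc n) (Suc n)" by (rule pmD(2)[OF assms(1)])
    then show "mat_delete (M p) i j $$ (a,b) = M p $$ (if a < i then a else Suc a, if b < j then b else Suc b)"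
      using ab unfolding mat_delete_def by simp
  qed
  also have "\<dots> \<in> poly_funs C" by (rule pmD(1)[OF assms(1)]) (use ab in auto)
  finally show "(\<lambda>p. mat_delete (M p) i j $$ (a,b)) \<in> poly_funs C" .
qed

lemma pm_adj:
  assumes "pm C n n M"
  shows "pm C n n (\<lambda>p. adj_mat (M p))"
  unfolding pm_def
proof (intro conjI allI impI)
  fix p show "adj_mat (M p) \<in> carrier_mat n n" using adj_mat(1) pmD(2)[OF assms] by blast
next
  fix i j assume ij: "i < n" "j < n"
  then obtain m where m: "n = Suc m" by (cases n) auto
  have "(\<lambda>p. adj_mat (M p) $$ (i,j)) = (\<lambda>p. (-1)^(j+i) * det (mat_delete (M p) j i))"
  proof
    fix p have "M p \<in> carrier_mat n n" by (rule pmD(2)[OF assms])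
    then show "adj_mat (M p) $$ (i,j) = (-1)^(j+i) * det (mat_delete (M p) j i)"
      using ij by (simp add: adj_mat_def cofactor_def)
  qed
  also have "\<dots> \<in> poly_funs C"
    using pm_det[OF pm_mat_delete[of C m M j i]] assms ij m by (intro pf_cmult) auto
  finally show "(\<lambda>p. adj_mat (M p) $$ (i,j)) \<in> poly_funs C" .
qed

lemma pm_four_block:
  assumes "pm C n1 m1 A" "pm C n1 m2 B" "pm C n2 m1 E" "pm C n2 m2 F"
  shows "pm C (n1+n2) (m1+m2) (\<lambda>p. four_block_mat (A p) (B p) (E p) (F p))"
  unfolding pm_def
proof (intro conjI allI impI)
  fix p show "four_block_mat (A p) (B p) (E p) (F p) \<in> carrier_mat (n1+n2) (m1+m2)"
    using pmD(2)[OF assms(1), of p] pmD(2)[OF assms(4), of p] by simp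
next
  fix i j assume ij: "i < n1+n2" "j < m1+m2"
  have "(\<lambda>p. four_block_mat (A p) (B p) (E p) (F p) $$ (i,j)) = (\<lambda>p. if i < n1 then
      if j < m1 then A p $$ (i,j) else B p $$ (i,j - m1)
      else if j < m1 then E p $$ (i - n1, j) else F p $$ (i - n1, j - m1))"
  proof
    fix p
    have c: "A p \<in> carrier_mat n1 m1" "F p \<in> carrier_mat n2 m2"
      using pmD(2)[OF assms(1), of p] pmD(2)[OF assms(4), of p] by auto
    show "four_block_mat (A p) (B p) (E p) (F p) $$ (i,j) = (if i < n1 then
      if j < m1 then A p $$ (i,j) else B p $$ (i,j - m1)
      else if j < m1 then E p $$ (i - n1, j) else F p $$ (i - n1, j - m1))"
      using c ij by (subst index_mat_four_block) auto
  qed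
  also have "\<dots> \<in> poly_funs C"
    using ij by (cases "i < n1"; cases "j < m1") (auto intro!: pmD(1)[OF assms(1)] pmD(1)[OF assms(2)] pmD(1)[OF assms(3)] pmD(1)[OF assms(4)])
  finally show "(\<lambda>p. four_block_mat (A p) (B p) (E p) (F p) $$ (i,j)) \<in> poly_funs C" .
qed

lemma pm_mat:
  assumes "\<And>i j. i < n \<Longrightarrow> j < m \<Longrightarrow> (\<lambda>p. h p i j) \<in> poly_funs C"
  shows "pm C n m (\<lambda>p. mat n m (\<lambda>(i,j). h p i j))"
  using assms unfolding pm_def by auto

lemma pm_smult:
  assumes "pm C n m A" "s \<in> poly_funs C"
  shows "pm C n m (\<lambda>p. s p \<cdot>\<^sub>m A p)"
  unfolding pm_def
proof (intro conjI allI impI)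
  fix p show "s p \<cdot>\<^sub>m A p \<in> carrier_mat n m" using pmD(2)[OF assms(1), of p] by simp
next
  fix i j assume ij: "i < n" "j < m"
  have "(\<lambda>p. (s p \<cdot>\<^sub>m A p) $$ (i,j)) = (\<lambda>p. s p * A p $$ (i,j))"
  proof
    fix p show "(s p \<cdot>\<^sub>m A p) $$ (i,j) = s p * A p $$ (i,j)"
      using pmD(2)[OF assms(1), of p] ij by simp
  qed
  also have "\<dots> \<in> poly_funs C" by (intro poly_funs.mult assms(2) pmD(1)[OF assms(1)] ij)
  finally show "(\<lambda>p. (s p \<cdot>\<^sub>m A p) $$ (i,j)) \<in> poly_funs C" .
qed

lemma pm_uminus:
  assumes "pm C n m A"
  shows "pm C n m (\<lambda>p. - A p)"
  unfolding pm_def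
proof (intro conjI allI impI)
  fix p show "- A p \<in> carrier_mat n m" using pmD(2)[OF assms(1), of p] by simp
next
  fix i j assume ij: "i < n" "j < m"
  have "(\<lambda>p. (- A p) $$ (i,j)) = (\<lambda>p. - A p $$ (i,j))"
  proof
    fix p show "(- A p) $$ (i,j) = - A p $$ (i,j)"
      using pmD(2)[OF assms(1), of p] ij by simp
  qed
  also have "\<dots> \<in> poly_funs C" by (intro pf_uminus pmD(1)[OF assms(1)] ij)
  finally show "(\<lambda>p. (- A p) $$ (i,j)) \<in> poly_funs C" .
qed

lemma pm_one: "pm C n n (\<lambda>p. 1\<^sub>m n)"
  unfolding pm_def by (auto intro: poly_funs.const)

lemma pm_zero: "pm C n m (\<lambda>p. 0\<^sub>m n m)"
  unfolding pm_def by (auto intro: poly_funs.const)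


lemma pathmat_carrier:
  assumes "chain_ok Q x cs" "\<And>a. a < narrs Q \<Longrightarrow> V a \<in> carrier_mat (D (tgt Q a)) (D (src Q a))"
  shows "pathmat Q D V x cs \<in> carrier_mat (D (pend Q x cs)) (D x)"
  using assms(1)
proof (induction cs arbitrary: x)
  case Nil then show ?case by simp
next
  case (Cons a as)
  then have a: "a < narrs Q" "src Q a = x" "chain_ok Q (tgt Q a) as" by auto
  have "pathmat Q D V (tgt Q a) as \<in> carrier_mat (D (pend Q (tgt Q a) as)) (D (tgt Q a))"
    using Cons.IH a(3) by blast
  moreover have "V a \<in> carrier_mat (D (tgt Q a)) (D x)" using assms(2)[OF a(1)] a(2) by simp
  ultimately show ?case by simp
qed

lemma pathmat_cong:
  assumes "chain_ok Q x cs" "\<And>a. a < narrs Q \<Longrightarrow> V a = V' a"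
  shows "pathmat Q D V x cs = pathmat Q D V' x cs"
  using assms(1) by (induction cs arbitrary: x) (auto simp: assms(2))

lemma pend_lt:
  assumes "wf_quiver Q" "x < nverts Q" "chain_ok Q x cs"
  shows "pend Q x cs < nverts Q"
  using assms(2,3) by (induction cs arbitrary: x) (use assms(1) in \<open>auto simp: wf_quiver_def\<close>)

lemma mult5:
  fixes Gy :: "'k::field mat"
  assumes "Gy \<in> carrier_mat ny ny" "P \<in> carrier_mat ny nt" "Gt \<in> carrier_mat nt nt" "Git \<in> carrier_mat nt nt"
    "Wa \<in> carrier_mat nt nx" "Gx \<in> carrier_mat nx nx" "Gt * Git = 1\<^sub>m nt"
  shows "(Gy * P * Gt) * (Git * Wa * Gx) = Gy * (P * Wa) * Gx"
proof -
  have c1: "Gy * P * Gt \<in> carrier_mat ny nt" using assms by simp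
  have c2: "Git * Wa \<in> carrier_mat nt nx" using assms by simp
  have "(Gy * P * Gt) * (Git * Wa * Gx) = ((Gy * P * Gt) * (Git * Wa)) * Gx"
    using assoc_mult_mat[OF c1 c2 assms(6)] by simp
  also have "(Gy * P * Gt) * (Git * Wa) = ((Gy * P * Gt) * Git) * Wa"
    using assoc_mult_mat[OF c1 assms(4) assms(5)] by simp
  also have "(Gy * P * Gt) * Git = (Gy * P) * (Gt * Git)"
    using assoc_mult_mat[OF _ assms(3) assms(4), of "Gy * P" ny] assms by simp
  also have "\<dots> = Gy * P" using assms by simp
  also have "Gy * P * Wa = Gy * (P * Wa)" using assoc_mult_mat[OF assms(1,2,5)] .
  finally show ?thesis .
qed

lemma pathmat_conj:
  fixes W :: "nat \<Rightarrow> 'k::field mat"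
  assumes wf: "wf_quiver Q" and x: "x < nverts Q" and ch: "chain_ok Q x cs"
    and W: "\<And>a. a < narrs Q \<Longrightarrow> W a \<in> carrier_mat (N (tgt Q a)) (N (src Q a))"
    and G: "\<And>y. y < nverts Q \<Longrightarrow> G y \<in> carrier_mat (N y) (N y)"
    and Gi: "\<And>y. y < nverts Q \<Longrightarrow> Gi y \<in> carrier_mat (N y) (N y)"
    and inv1: "\<And>y. y < nverts Q \<Longrightarrow> Gi y * G y = 1\<^sub>m (N y)"
    and inv2: "\<And>y. y < nverts Q \<Longrightarrow> G y * Gi y = 1\<^sub>m (N y)"
    and W': "\<And>a. a < narrs Q \<Longrightarrow> W' a = Gi (tgt Q a) * W a * G (src Q a)"
  shows "pathmat Q N W' x cs = Gi (pend Q x cs) * pathmat Q N W x cs * G x"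
  using x ch
proof (induction cs arbitrary: x)
  case Nil
  have "Gi x * 1\<^sub>m (N x) * G x = Gi x * G x" using Gi[OF Nil(1)] by simp
  then show ?case using inv1[OF Nil(1)] by simp
next
  case (Cons a as)
  then have a: "a < narrs Q" "src Q a = x" "chain_ok Q (tgt Q a) as" by auto
  let ?t = "tgt Q a" let ?y = "pend Q ?t as"
  have t: "?t < nverts Q" using wf a(1) by (auto simp: wf_quiver_def)
  have y: "?y < nverts Q" using pend_lt[OF wf t a(3)] .
  have "pathmat Q N W' x (a # as) = pathmat Q N W' ?t as * W' a" by simp
  also have "\<dots> = (Gi ?y * pathmat Q N W ?t as * G ?t) * (Gi ?t * W a * G x)"
    using Cons.IH[OF t a(3)] W'[OF a(1)] a(2) by simp
  also have "\<dots> = Gi ?y * (pathmat Q N W ?t as * W a) * G x"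
  proof -
    have Wa: "W a \<in> carrier_mat (N ?t) (N x)" using W[OF a(1)] a(2) by simp
    show ?thesis
      by (rule mult5[OF Gi[OF y] pathmat_carrier[OF a(3) W] G[OF t] Gi[OF t] Wa G[OF Cons(2)] inv2[OF t]])
  qed
  finally show ?case by simp
qed

lemma entry3:
  fixes A :: "'k::field mat"
  assumes "A \<in> carrier_mat n1 n2" "P \<in> carrier_mat n2 n3" "B \<in> carrier_mat n3 n4" "i < n1" "j < n4"
  shows "(A * P * B) $$ (i,j) = (\<Sum>k\<in>{0..<n2}. \<Sum>l\<in>{0..<n3}. A $$ (i,k) * P $$ (k,l) * B $$ (l,j))"
proof -
  have "(A * P * B) $$ (i,j) = (\<Sum>l\<in>{0..<n3}. (A * P) $$ (i,l) * B $$ (l,j))"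
    using assms by (simp add: scalar_prod_def del: assoc_mult_mat)
  also have "\<dots> = (\<Sum>l\<in>{0..<n3}. (\<Sum>k\<in>{0..<n2}. A $$ (i,k) * P $$ (k,l)) * B $$ (l,j))"
    using assms by (intro sum.cong refl) (simp add: scalar_prod_def)
  also have "\<dots> = (\<Sum>l\<in>{0..<n3}. \<Sum>k\<in>{0..<n2}. A $$ (i,k) * P $$ (k,l) * B $$ (l,j))"
    by (simp add: sum_distrib_right)
  also have "\<dots> = (\<Sum>k\<in>{0..<n2}. \<Sum>l\<in>{0..<n3}. A $$ (i,k) * P $$ (k,l) * B $$ (l,j))"
    by (rule sum.swap)
  finally show ?thesis .
qed

lemma I_paths:
  assumes "admissible Q I" "\<rho> \<in> I" "\<rho> p \<noteq> 0"
  shows "chain_ok Q (fst p) (snd p)" "length (snd p) \<ge> 2"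
proof -
  have "\<rho> \<in> {f. in_kQ Q f}" using assms(1,2) by (auto simp: admissible_def kq_ideal_def)
  then show "chain_ok Q (fst p) (snd p)" using assms(3) by (auto simp: in_kQ_def is_path_def)
  have "\<rho> \<in> arrow_ideal_pow Q 2" using assms(1,2) by (auto simp: admissible_def)
  then show "length (snd p) \<ge> 2" using assms(3) by (cases p) (auto simp: arrow_ideal_pow_def)
qed

lemma I_finite:
  assumes "admissible Q I" "\<rho> \<in> I"
  shows "finite {p. \<rho> p \<noteq> 0}"
proof -
  have "\<rho> \<in> {f. in_kQ Q f}" using assms(1,2) by (auto simp: admissible_def kq_ideal_def)
  then show ?thesis by (auto simp: in_kQ_def)
qed

lemma rels_conj:
  fixes W :: "nat \<Rightarrow> 'k::field mat"
  assumes adm: "admissible Q I" and wf: "wf_quiver Q" and rel: "satisfies_rels Q I N W"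
    and W: "\<And>a. a < narrs Q \<Longrightarrow> W a \<in> carrier_mat (N (tgt Q a)) (N (src Q a))"
    and G: "\<And>y. y < nverts Q \<Longrightarrow> G y \<in> carrier_mat (N y) (N y)"
    and Gi: "\<And>y. y < nverts Q \<Longrightarrow> Gi y \<in> carrier_mat (N y) (N y)"
    and inv1: "\<And>y. y < nverts Q \<Longrightarrow> Gi y * G y = 1\<^sub>m (N y)"
    and inv2: "\<And>y. y < nverts Q \<Longrightarrow> G y * Gi y = 1\<^sub>m (N y)"
    and W': "\<And>a. a < narrs Q \<Longrightarrow> W' a = Gi (tgt Q a) * W a * G (src Q a)"
  shows "satisfies_rels Q I N W'"
  unfolding satisfies_rels_def
proof (intro ballI allI impI)
  fix \<rho> x y i j assume \<rho>: "\<rho> \<in> I" and x: "x < nverts Q" and y: "y < nverts Q" and i: "i < N y" and j: "j < N x"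
  let ?S = "{p. \<rho> p \<noteq> 0 \<and> fst p = x \<and> pend Q x (snd p) = y}"
  have chS: "chain_ok Q x (snd p)" if "p \<in> ?S" for p using I_paths(1)[OF adm \<rho>, of p] that by auto
  have "(\<Sum>p\<in>?S. \<rho> p * pathmat Q N W' x (snd p) $$ (i, j))
      = (\<Sum>p\<in>?S. \<rho> p * (\<Sum>k\<in>{0..<N y}. \<Sum>l\<in>{0..<N x}. Gi y $$ (i,k) * pathmat Q N W x (snd p) $$ (k,l) * G x $$ (l,j)))"
  proof (intro sum.cong refl)
    fix p assume p: "p \<in> ?S"
    have "pathmat Q N W' x (snd p) = Gi y * pathmat Q N W x (snd p) * G x"
      using pathmat_conj[OF wf x chS[OF p] W G Gi inv1 inv2 W'] p by auto
    moreover have "pathmat Q N W x (snd p) \<in> carrier_mat (N y) (N x)"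
      using pathmat_carrier[OF chS[OF p] W] p by auto
    ultimately show "\<rho> p * pathmat Q N W' x (snd p) $$ (i, j) = \<rho> p * (\<Sum>k\<in>{0..<N y}. \<Sum>l\<in>{0..<N x}. Gi y $$ (i,k) * pathmat Q N W x (snd p) $$ (k,l) * G x $$ (l,j))"
      using entry3[OF Gi[OF y] _ G[OF x] i j] by simp
  qed
  also have "\<dots> = (\<Sum>k\<in>{0..<N y}. \<Sum>l\<in>{0..<N x}. Gi y $$ (i,k) * G x $$ (l,j) * (\<Sum>p\<in>?S. \<rho> p * pathmat Q N W x (snd p) $$ (k,l)))"
    by (simp add: sum_distrib_left sum.swap[of _ ?S] mult_ac)
  also have "\<dots> = 0"
    using rel \<rho> x y unfolding satisfies_rels_def by (intro sum.neutral ballI) simp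
  finally show "(\<Sum>p\<in>?S. \<rho> p * pathmat Q N W' x (snd p) $$ (i, j)) = 0" .
qed


lemma pathmat_block:
  fixes V :: "nat \<Rightarrow> 'k::field mat"
  assumes ch: "chain_ok Q x cs"
    and V: "\<And>a. a < narrs Q \<Longrightarrow> V a \<in> carrier_mat (d (tgt Q a)) (d (src Q a))"
    and U: "\<And>a. a < narrs Q \<Longrightarrow> U a \<in> carrier_mat (e (tgt Q a)) (e (src Q a))"
    and Z: "\<And>a. a < narrs Q \<Longrightarrow> Z a \<in> carrier_mat (d (tgt Q a)) (e (src Q a))"
  shows "\<exists>B. B \<in> carrier_mat (d (pend Q x cs)) (e x) \<and>
    pathmat Q (\<lambda>x. d x + e x) (block_rep Q e d V Z U) x cs
     = four_block_mat (pathmat Q d V x cs) B (0\<^sub>m (e (pend Q x cs)) (d x)) (pathmat Q e U x cs)"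
  using ch
proof (induction cs arbitrary: x)
  case Nil
  show ?case by (rule exI[of _ "0\<^sub>m (d x) (e x)"]) simp
next
  case (Cons a as)
  then have a: "a < narrs Q" "src Q a = x" "chain_ok Q (tgt Q a) as" by auto
  let ?t = "tgt Q a" let ?y = "pend Q ?t as"
  from Cons.IH[OF a(3)] obtain B where B: "B \<in> carrier_mat (d ?y) (e ?t)"
    "pathmat Q (\<lambda>x. d x + e x) (block_rep Q e d V Z U) ?t as
     = four_block_mat (pathmat Q d V ?t as) B (0\<^sub>m (e ?y) (d ?t)) (pathmat Q e U ?t as)" by blast
  have Pv: "pathmat Q d V ?t as \<in> carrier_mat (d ?y) (d ?t)" by (rule pathmat_carrier[OF a(3) V])
  have Pu: "pathmat Q e U ?t as \<in> carrier_mat (e ?y) (e ?t)" by (rule pathmat_carrier[OF a(3) U])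
  have Va: "V a \<in> carrier_mat (d ?t) (d x)" using V[OF a(1)] a(2) by simp
  have Ua: "U a \<in> carrier_mat (e ?t) (e x)" using U[OF a(1)] a(2) by simp
  have Za: "Z a \<in> carrier_mat (d ?t) (e x)" using Z[OF a(1)] a(2) by simp
  have "pathmat Q (\<lambda>x. d x + e x) (block_rep Q e d V Z U) x (a # as)
     = four_block_mat (pathmat Q d V ?t as) B (0\<^sub>m (e ?y) (d ?t)) (pathmat Q e U ?t as)
       * four_block_mat (V a) (Z a) (0\<^sub>m (e ?t) (d x)) (U a)"
    using B(2) a(2) by (simp add: block_rep_def)
  also have "\<dots> = four_block_mat (pathmat Q d V ?t as * V a + B * 0\<^sub>m (e ?t) (d x))
      (pathmat Q d V ?t as * Z a + B * U a)
      (0\<^sub>m (e ?y) (d ?t) * V a + pathmat Q e U ?t as * 0\<^sub>m (e ?t) (d x))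
      (0\<^sub>m (e ?y) (d ?t) * Z a + pathmat Q e U ?t as * U a)"
    by (rule mult_four_block_mat[OF Pv B(1) _ Pu Va Za _ Ua]) auto
  also have "\<dots> = four_block_mat (pathmat Q d V ?t as * V a) (pathmat Q d V ?t as * Z a + B * U a)
      (0\<^sub>m (e ?y) (d x)) (pathmat Q e U ?t as * U a)"
    using Pv Pu Va Ua Za B(1) by (simp add: right_mult_zero_mat left_mult_zero_mat)
  finally show ?case
    using Pv Pu Va Ua Za B(1) by (intro exI[of _ "pathmat Q d V ?t as * Z a + B * U a"]) simp
qed



lemma rels_U:
  fixes V :: "nat \<Rightarrow> 'k::field mat"
  assumes adm: "admissible Q I"
    and rel: "satisfies_rels Q I (\<lambda>x. d x + e x) (block_rep Q e d V Z U)"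
    and V: "\<And>a. a < narrs Q \<Longrightarrow> V a \<in> carrier_mat (d (tgt Q a)) (d (src Q a))"
    and U: "\<And>a. a < narrs Q \<Longrightarrow> U a \<in> carrier_mat (e (tgt Q a)) (e (src Q a))"
    and Z: "\<And>a. a < narrs Q \<Longrightarrow> Z a \<in> carrier_mat (d (tgt Q a)) (e (src Q a))"
  shows "satisfies_rels Q I e U"
  unfolding satisfies_rels_def
proof (intro ballI allI impI)
  fix \<rho> x y i j assume \<rho>: "\<rho> \<in> I" and x: "x < nverts Q" and y: "y < nverts Q" and i: "i < e y" and j: "j < e x"
  let ?S = "{p. \<rho> p \<noteq> 0 \<and> fst p = x \<and> pend Q x (snd p) = y}"
  have chS: "chain_ok Q x (snd p)" if "p \<in> ?S" for p using I_paths(1)[OF adm \<rho>, of p] that by auto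
  have "(\<Sum>p\<in>?S. \<rho> p * pathmat Q e U x (snd p) $$ (i, j))
     = (\<Sum>p\<in>?S. \<rho> p * pathmat Q (\<lambda>x. d x + e x) (block_rep Q e d V Z U) x (snd p) $$ (d y + i, d x + j))"
  proof (intro sum.cong refl)
    fix p assume p: "p \<in> ?S"
    obtain B where B: "B \<in> carrier_mat (d y) (e x)"
      "pathmat Q (\<lambda>x. d x + e x) (block_rep Q e d V Z U) x (snd p)
     = four_block_mat (pathmat Q d V x (snd p)) B (0\<^sub>m (e y) (d x)) (pathmat Q e U x (snd p))"
      using pathmat_block[OF chS[OF p] V U Z] p by auto
    have Pv: "pathmat Q d V x (snd p) \<in> carrier_mat (d y) (d x)" using pathmat_carrier[OF chS[OF p] V] p by auto
    have Pu: "pathmat Q e U x (snd p) \<in> carrier_mat (e y) (e x)" using pathmat_carrier[OF chS[OF p] U] p by auto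
    show "\<rho> p * pathmat Q e U x (snd p) $$ (i, j) = \<rho> p * pathmat Q (\<lambda>x. d x + e x) (block_rep Q e d V Z U) x (snd p) $$ (d y + i, d x + j)"
      unfolding B(2) using Pv Pu i j by simp
  qed
  also have "\<dots> = 0" using rel \<rho> x y i j unfolding satisfies_rels_def by simp
  finally show "(\<Sum>p\<in>?S. \<rho> p * pathmat Q e U x (snd p) $$ (i, j)) = 0" .
qed

lemma rels_cong:
  assumes adm: "admissible Q I" and rel: "satisfies_rels Q I N W"
    and eq: "\<And>a. a < narrs Q \<Longrightarrow> W a = W' a"
  shows "satisfies_rels Q I N W'"
  unfolding satisfies_rels_def
proof (intro ballI allI impI)
  fix \<rho> x y i j assume \<rho>: "\<rho> \<in> I" and x: "x < nverts Q" and y: "y < nverts Q" and i: "i < N y" and j: "j < N x"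
  let ?S = "{p. \<rho> p \<noteq> 0 \<and> fst p = x \<and> pend Q x (snd p) = y}"
  have chS: "chain_ok Q x (snd p)" if "p \<in> ?S" for p using I_paths(1)[OF adm \<rho>, of p] that by auto
  have "(\<Sum>p\<in>?S. \<rho> p * pathmat Q N W' x (snd p) $$ (i, j)) = (\<Sum>p\<in>?S. \<rho> p * pathmat Q N W x (snd p) $$ (i, j))"
  proof (intro sum.cong refl)
    fix p assume p: "p \<in> ?S"
    show "\<rho> p * pathmat Q N W' x (snd p) $$ (i,j) = \<rho> p * pathmat Q N W x (snd p) $$ (i,j)"
      using pathmat_cong[where V=W and V'=W' and D=N, OF chS[OF p] eq] by simp
  qed
  also have "\<dots> = 0" using rel \<rho> x y i j unfolding satisfies_rels_def by simp
  finally show "(\<Sum>p\<in>?S. \<rho> p * pathmat Q N W' x (snd p) $$ (i, j)) = 0" .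
qed



lemma pathmat_zero:
  assumes "chain_ok Q x cs" "cs \<noteq> []"
  shows "pathmat Q D (\<lambda>a. 0\<^sub>m (D (tgt Q a)) (D (src Q a))) x cs = (0\<^sub>m (D (pend Q x cs)) (D x) :: 'k::field mat)"
proof (cases cs)
  case (Cons a as)
  have c: "pathmat Q D (\<lambda>a. 0\<^sub>m (D (tgt Q a)) (D (src Q a))) (tgt Q a) as \<in> carrier_mat (D (pend Q (tgt Q a) as)) (D (tgt Q a))"
    using assms Cons by (intro pathmat_carrier) auto
  show ?thesis using Cons assms right_mult_zero_mat[OF c] by simp
qed (use assms in simp)

lemma zero_rep:
  assumes adm: "admissible Q I"
  shows "is_rep Q I D (\<lambda>a. (0\<^sub>m (D (tgt Q a)) (D (src Q a)) :: 'k::field mat))"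
  unfolding is_rep_def satisfies_rels_def
proof (intro conjI allI impI ballI)
  fix \<rho> x y i j assume \<rho>: "\<rho> \<in> I" and x: "x < nverts Q" and y: "y < nverts Q" and i: "i < D y" and j: "j < D x"
  show "(\<Sum>p\<in>{p. \<rho> p \<noteq> 0 \<and> fst p = x \<and> pend Q x (snd p) = y}. \<rho> p * pathmat Q D (\<lambda>a. 0\<^sub>m (D (tgt Q a)) (D (src Q a))) x (snd p) $$ (i, j)) = (0::'k)"
  proof (intro sum.neutral ballI)
    fix p assume p: "p \<in> {p. \<rho> p \<noteq> 0 \<and> fst p = x \<and> pend Q x (snd p) = y}"
    have "chain_ok Q x (snd p)" "snd p \<noteq> []" using I_paths[OF adm \<rho>, of p] p by auto
    from pathmat_zero[OF this, of D] p have eq: "pathmat Q D (\<lambda>a. 0\<^sub>m (D (tgt Q a)) (D (src Q a))) x (snd p) = (0\<^sub>m (D y) (D x) :: 'k mat)" by simp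
    show "\<rho> p * pathmat Q D (\<lambda>a. 0\<^sub>m (D (tgt Q a)) (D (src Q a))) x (snd p) $$ (i, j) = (0::'k)" unfolding eq using i j by simp
  qed
qed simp


definition F1m :: "(nat \<Rightarrow> nat) \<Rightarrow> 'k::field triple \<Rightarrow> nat \<Rightarrow> 'k mat" where
  "F1m d p x = mat (d x) (d x) (\<lambda>(i,j). snd (snd p) x $$ (i,j))"
definition F2m :: "(nat \<Rightarrow> nat) \<Rightarrow> (nat \<Rightarrow> nat) \<Rightarrow> 'k::field triple \<Rightarrow> nat \<Rightarrow> 'k mat" where
  "F2m d e p x = mat (e x) (d x) (\<lambda>(i,j). snd (snd p) x $$ (d x + i, j))"
definition Dxm :: "(nat \<Rightarrow> nat) \<Rightarrow> 'k::field triple \<Rightarrow> nat \<Rightarrow> 'k" where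
  "Dxm d p x = det (F1m d p x)"
definition Gm :: "(nat \<Rightarrow> nat) \<Rightarrow> (nat \<Rightarrow> nat) \<Rightarrow> 'k::field triple \<Rightarrow> nat \<Rightarrow> 'k mat" where
  "Gm d e p x = four_block_mat (F1m d p x) (0\<^sub>m (d x) (e x)) (F2m d e p x) (1\<^sub>m (e x))"
definition Ghm :: "(nat \<Rightarrow> nat) \<Rightarrow> (nat \<Rightarrow> nat) \<Rightarrow> 'k::field triple \<Rightarrow> nat \<Rightarrow> 'k mat" where
  "Ghm d e p x = four_block_mat (adj_mat (F1m d p x)) (0\<^sub>m (d x) (e x))
     (- (F2m d e p x * adj_mat (F1m d p x))) (Dxm d p x \<cdot>\<^sub>m 1\<^sub>m (e x))"
definition Gim :: "(nat \<Rightarrow> nat) \<Rightarrow> (nat \<Rightarrow> nat) \<Rightarrow> 'k::field triple \<Rightarrow> nat \<Rightarrow> 'k mat" where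
  "Gim d e p x = (1 / Dxm d p x) \<cdot>\<^sub>m Ghm d e p x"

lemma F1m_carrier[simp]: "F1m d p x \<in> carrier_mat (d x) (d x)" by (simp add: F1m_def)
lemma F2m_carrier[simp]: "F2m d e p x \<in> carrier_mat (e x) (d x)" by (simp add: F2m_def)
lemma adj_carrier[simp]: "adj_mat (F1m d p x) \<in> carrier_mat (d x) (d x)" using adj_mat(1)[OF F1m_carrier] .
lemma Gm_carrier[simp]: "Gm d e p x \<in> carrier_mat (d x + e x) (d x + e x)" by (simp add: Gm_def)
lemma Ghm_carrier[simp]: "Ghm d e p x \<in> carrier_mat (d x + e x) (d x + e x)" by (simp add: Ghm_def)
lemma Gim_carrier[simp]: "Gim d e p x \<in> carrier_mat (d x + e x) (d x + e x)" by (simp add: Gim_def)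

lemma Ghm_Gm: "Ghm d e p x * Gm d e p x = Dxm d p x \<cdot>\<^sub>m 1\<^sub>m (d x + e x)"
proof -
  let ?F1 = "F1m d p x" and ?F2 = "F2m d e p x" and ?A = "adj_mat (F1m d p x)" and ?D = "Dxm d p x"
  have cF1: "?F1 \<in> carrier_mat (d x) (d x)" and cF2: "?F2 \<in> carrier_mat (e x) (d x)" and cA: "?A \<in> carrier_mat (d x) (d x)" by simp_all
  have h1: "?A * ?F1 = ?D \<cdot>\<^sub>m 1\<^sub>m (d x)" using adj_mat(3)[OF cF1] by (simp add: Dxm_def)
  have h2: "- (?F2 * ?A) * ?F1 = - (?D \<cdot>\<^sub>m ?F2)"
  proof -
    have "- (?F2 * ?A) * ?F1 = - ((?F2 * ?A) * ?F1)" by (rule uminus_mult_left_mat) (use carrier_matD[OF cA] carrier_matD[OF cF1] in simp)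
    also have "(?F2 * ?A) * ?F1 = ?F2 * (?A * ?F1)" using assoc_mult_mat[OF cF2 cA cF1] .
    also have "\<dots> = ?F2 * (?D \<cdot>\<^sub>m 1\<^sub>m (d x))" by (simp add: h1)
    also have "\<dots> = ?D \<cdot>\<^sub>m (?F2 * 1\<^sub>m (d x))" by (rule mult_smult_distrib[OF cF2 one_carrier_mat])
    also have "\<dots> = ?D \<cdot>\<^sub>m ?F2" using right_mult_one_mat[OF cF2] by simp
    finally show ?thesis .
  qed
  have h3: "(?D \<cdot>\<^sub>m 1\<^sub>m (e x)) * ?F2 = ?D \<cdot>\<^sub>m ?F2"
    using mult_smult_assoc_mat[of "1\<^sub>m (e x)" "e x" "e x" ?F2 "d x" ?D] cF2 by simp
  have "Ghm d e p x * Gm d e p x = four_block_mat (?A * ?F1 + 0\<^sub>m (d x) (e x) * ?F2) (?A * 0\<^sub>m (d x) (e x) + 0\<^sub>m (d x) (e x) * 1\<^sub>m (e x))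
      (- (?F2 * ?A) * ?F1 + (?D \<cdot>\<^sub>m 1\<^sub>m (e x)) * ?F2) (- (?F2 * ?A) * 0\<^sub>m (d x) (e x) + (?D \<cdot>\<^sub>m 1\<^sub>m (e x)) * 1\<^sub>m (e x))"
    unfolding Ghm_def Gm_def
    by (rule mult_four_block_mat[OF cA zero_carrier_mat _ _ cF1 zero_carrier_mat cF2 one_carrier_mat])
      (use mult_carrier_mat[OF cF2 cA] in auto)
  also have "\<dots> = four_block_mat (?D \<cdot>\<^sub>m 1\<^sub>m (d x)) (0\<^sub>m (d x) (e x)) (0\<^sub>m (e x) (d x)) (?D \<cdot>\<^sub>m 1\<^sub>m (e x))"
  proof -
    have "- (?D \<cdot>\<^sub>m ?F2) + ?D \<cdot>\<^sub>m ?F2 = 0\<^sub>m (e x) (d x)" by (rule uminus_l_inv_mat) simp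
    moreover have "0\<^sub>m (d x) (e x) * ?F2 = 0\<^sub>m (d x) (d x)" by (rule left_mult_zero_mat[OF cF2])
    moreover have "?A * 0\<^sub>m (d x) (e x) = 0\<^sub>m (d x) (e x)" by (rule right_mult_zero_mat[OF cA])
    moreover have "- (?F2 * ?A) * 0\<^sub>m (d x) (e x) = 0\<^sub>m (e x) (e x)"
      by (rule right_mult_zero_mat[OF uminus_carrier_mat[OF mult_carrier_mat[OF cF2 cA]]])
    moreover have "?D \<cdot>\<^sub>m 1\<^sub>m (d x) + 0\<^sub>m (d x) (d x) = ?D \<cdot>\<^sub>m 1\<^sub>m (d x)"
      by (rule right_add_zero_mat) simp
    moreover have "0\<^sub>m (e x) (e x) + ?D \<cdot>\<^sub>m 1\<^sub>m (e x) = ?D \<cdot>\<^sub>m 1\<^sub>m (e x)"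
      by (rule left_add_zero_mat) simp
    moreover have "0\<^sub>m (d x) (e x) + 0\<^sub>m (d x) (e x) = (0\<^sub>m (d x) (e x) :: 'a mat)"
      by (rule left_add_zero_mat) simp
    ultimately show ?thesis using h1 h2 h3 by (simp del: uminus_l_inv_mat)
  qed
  also have "\<dots> = ?D \<cdot>\<^sub>m 1\<^sub>m (d x + e x)" by (rule eq_matI) auto
  finally show ?thesis .
qed

lemma Gim_Gm:
  assumes "Dxm d p x \<noteq> 0"
  shows "Gim d e p x * Gm d e p x = 1\<^sub>m (d x + e x)" "Gm d e p x * Gim d e p x = 1\<^sub>m (d x + e x)"
proof -
  have "Gim d e p x * Gm d e p x = (1 / Dxm d p x) \<cdot>\<^sub>m (Ghm d e p x * Gm d e p x)"
    unfolding Gim_def by (rule mult_smult_assoc_mat[OF Ghm_carrier Gm_carrier])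
  also have "\<dots> = 1\<^sub>m (d x + e x)" unfolding Ghm_Gm using assms by (intro eq_matI) auto
  finally show 1: "Gim d e p x * Gm d e p x = 1\<^sub>m (d x + e x)" .
  show "Gm d e p x * Gim d e p x = 1\<^sub>m (d x + e x)"
    by (rule mat_mult_left_right_inverse[OF Gim_carrier Gm_carrier 1])
qed


definition stdm :: "(nat \<Rightarrow> nat) \<Rightarrow> (nat \<Rightarrow> nat) \<Rightarrow> nat \<Rightarrow> 'k::field mat" where
  "stdm d e x = mat (d x + e x) (d x) (\<lambda>(i,j). if i = j then 1 else 0)"

definition Wtm :: "quiver \<Rightarrow> (nat \<Rightarrow> nat) \<Rightarrow> (nat \<Rightarrow> nat) \<Rightarrow> 'k::field triple \<Rightarrow> nat \<Rightarrow> 'k mat" where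
  "Wtm Q d e p a = mat (d (tgt Q a) + e (tgt Q a)) (d (src Q a) + e (src Q a)) (\<lambda>(i,j). fst (snd p) a $$ (i,j))"

definition Wcm :: "quiver \<Rightarrow> (nat \<Rightarrow> nat) \<Rightarrow> (nat \<Rightarrow> nat) \<Rightarrow> 'k::field triple \<Rightarrow> nat \<Rightarrow> 'k mat" where
  "Wcm Q d e p a = Gim d e p (tgt Q a) * Wtm Q d e p a * Gm d e p (src Q a)"

definition Um :: "quiver \<Rightarrow> (nat \<Rightarrow> nat) \<Rightarrow> (nat \<Rightarrow> nat) \<Rightarrow> 'k::field triple \<Rightarrow> nat \<Rightarrow> 'k mat" where
  "Um Q d e p a = mat (e (tgt Q a)) (e (src Q a)) (\<lambda>(i,j). Wcm Q d e p a $$ (d (tgt Q a) + i, d (src Q a) + j))"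

definition Zm :: "quiver \<Rightarrow> (nat \<Rightarrow> nat) \<Rightarrow> (nat \<Rightarrow> nat) \<Rightarrow> 'k::field triple \<Rightarrow> nat \<Rightarrow> 'k mat" where
  "Zm Q d e p a = mat (d (tgt Q a)) (e (src Q a)) (\<lambda>(i,j). Wcm Q d e p a $$ (i, d (src Q a) + j))"

definition psi :: "quiver \<Rightarrow> (nat \<Rightarrow> nat) \<Rightarrow> (nat \<Rightarrow> nat) \<Rightarrow> 'k::field triple \<Rightarrow> 'k triple" where
  "psi Q d e p = (Um Q d e p, fst p, Zm Q d e p)"

definition Dall :: "quiver \<Rightarrow> (nat \<Rightarrow> nat) \<Rightarrow> 'k::field triple \<Rightarrow> 'k" where
  "Dall Q d p = (\<Prod>x<nverts Q. Dxm d p x)"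

lemma stdm_carrier[simp]: "stdm d e x \<in> carrier_mat (d x + e x) (d x)" by (simp add: stdm_def)
lemma Wtm_carrier[simp]: "Wtm Q d e p a \<in> carrier_mat (d (tgt Q a) + e (tgt Q a)) (d (src Q a) + e (src Q a))"
  by (simp add: Wtm_def)
lemma Wcm_carrier[simp]: "Wcm Q d e p a \<in> carrier_mat (d (tgt Q a) + e (tgt Q a)) (d (src Q a) + e (src Q a))"
  unfolding Wcm_def by (rule mult_carrier_mat[OF mult_carrier_mat[OF Gim_carrier Wtm_carrier] Gm_carrier])

lemma mult_std:
  assumes "M \<in> carrier_mat n (d x + e x)" "i < n" "j < d x"
  shows "(M * stdm d e x) $$ (i,j) = M $$ (i,j)"
proof -
  have "(M * stdm d e x) $$ (i,j) = (\<Sum>k\<in>{0..<d x + e x}. M $$ (i,k) * (if k = j then 1 else 0))"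
    using assms by (simp add: scalar_prod_def stdm_def)
  also have "\<dots> = (\<Sum>k\<in>{0..<d x + e x}. if k = j then M $$ (i,k) else 0)"
    by (intro sum.cong refl) simp
  also have "\<dots> = M $$ (i,j)" using assms(3) by (simp add: sum.delta)
  finally show ?thesis .
qed

lemma std_mult:
  assumes "V \<in> carrier_mat (d x) m" "i < d x + e x" "j < m"
  shows "(stdm d e x * V) $$ (i,j) = (if i < d x then V $$ (i,j) else 0)"
proof -
  have "(stdm d e x * V) $$ (i,j) = (\<Sum>k\<in>{0..<d x}. (if i = k then 1 else 0) * V $$ (k,j))"
    using assms by (simp add: scalar_prod_def stdm_def)
  also have "\<dots> = (\<Sum>k\<in>{0..<d x}. if i = k then V $$ (k,j) else 0)"
    by (intro sum.cong refl) simp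
  also have "\<dots> = (if i < d x then V $$ (i,j) else 0)" by (simp add: sum.delta)
  finally show ?thesis .
qed

lemma Gm_std:
  assumes "snd (snd p) x \<in> carrier_mat (d x + e x) (d x)"
  shows "Gm d e p x * stdm d e x = snd (snd p) x"
proof (rule eq_matI)
  fix i j assume ij: "i < dim_row (snd (snd p) x)" "j < dim_col (snd (snd p) x)"
  then have ij': "i < d x + e x" "j < d x" using assms by auto
  have "(Gm d e p x * stdm d e x) $$ (i,j) = Gm d e p x $$ (i,j)" by (rule mult_std[where d=d and e=e and x=x]) (use ij' in auto)
  also have "\<dots> = snd (snd p) x $$ (i,j)" using ij' by (simp add: Gm_def F1m_def F2m_def)
  finally show "(Gm d e p x * stdm d e x) $$ (i,j) = snd (snd p) x $$ (i,j)" .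
qed (use assms in \<open>auto simp: Gm_def stdm_def F1m_def\<close>)

lemma Dall_nz:
  assumes "Dall Q d p \<noteq> 0" "x < nverts Q"
  shows "Dxm d p x \<noteq> 0"
  using assms unfolding Dall_def by (auto simp: prod_zero_iff)

lemma Wc_std:
  fixes p :: "'k::field triple"
  assumes wf: "wf_quiver Q" and H: "p \<in> hom_var Q I d (\<lambda>x. d x + e x)" and D: "Dall Q d p \<noteq> 0"
    and a: "a < narrs Q"
  shows "Wcm Q d e p a * stdm d e (src Q a) = stdm d e (tgt Q a) * fst p a"
proof -
  obtain V W f where p: "p = (V, W, f)" by (cases p) auto
  let ?s = "src Q a" and ?t = "tgt Q a"
  have st: "?s < nverts Q" "?t < nverts Q" using wf a by (auto simp: wf_quiver_def)
  have Wa: "W a \<in> carrier_mat (d ?t + e ?t) (d ?s + e ?s)" using H a p by (auto simp: hom_var_def is_rep_def)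
  have Va: "V a \<in> carrier_mat (d ?t) (d ?s)" using H a p by (auto simp: hom_var_def is_rep_def)
  have fs: "f ?s \<in> carrier_mat (d ?s + e ?s) (d ?s)" and ft: "f ?t \<in> carrier_mat (d ?t + e ?t) (d ?t)"
    using H st p by (auto simp: hom_var_def)
  have comm: "W a * f ?s = f ?t * V a" using H a p by (auto simp: hom_var_def)
  have Wt: "Wtm Q d e p a = W a" using Wa p by (intro eq_matI) (auto simp: Wtm_def)
  have Gs: "Gm d e p ?s * stdm d e ?s = f ?s" using Gm_std[of p ?s d e] fs p by simp
  have Gt: "Gm d e p ?t * stdm d e ?t = f ?t" using Gm_std[of p ?t d e] ft p by simp
  have inv: "Gim d e p ?t * Gm d e p ?t = 1\<^sub>m (d ?t + e ?t)" using Gim_Gm(1)[OF Dall_nz[OF D st(2)]] .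
  have cGi: "Gim d e p ?t \<in> carrier_mat (d ?t + e ?t) (d ?t + e ?t)" by simp
  have cG: "Gm d e p ?t \<in> carrier_mat (d ?t + e ?t) (d ?t + e ?t)" by simp
  have cE: "stdm d e ?t \<in> carrier_mat (d ?t + e ?t) (d ?t)" by simp
  have cGiW: "Gim d e p ?t * W a \<in> carrier_mat (d ?t + e ?t) (d ?s + e ?s)" by (rule mult_carrier_mat[OF cGi Wa])
  have "Wcm Q d e p a * stdm d e ?s = (Gim d e p ?t * W a * Gm d e p ?s) * stdm d e ?s"
    by (simp add: Wcm_def Wt)
  also have "\<dots> = (Gim d e p ?t * W a) * (Gm d e p ?s * stdm d e ?s)"
    by (rule assoc_mult_mat[OF cGiW Gm_carrier[of d e p ?s] stdm_carrier[of d e ?s]])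
  also have "\<dots> = (Gim d e p ?t * W a) * f ?s" by (simp add: Gs)
  also have "\<dots> = Gim d e p ?t * (W a * f ?s)" by (rule assoc_mult_mat[OF cGi Wa fs])
  also have "\<dots> = Gim d e p ?t * ((Gm d e p ?t * stdm d e ?t) * V a)" by (simp add: comm Gt)
  also have "(Gm d e p ?t * stdm d e ?t) * V a = Gm d e p ?t * (stdm d e ?t * V a)"
    by (rule assoc_mult_mat[OF cG cE Va])
  also have "Gim d e p ?t * (Gm d e p ?t * (stdm d e ?t * V a)) = (Gim d e p ?t * Gm d e p ?t) * (stdm d e ?t * V a)"
    by (rule assoc_mult_mat[OF cGi cG mult_carrier_mat[OF cE Va], symmetric])
  also have "\<dots> = stdm d e ?t * V a" unfolding inv by (rule left_mult_one_mat[OF mult_carrier_mat[OF cE Va]])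
  finally show ?thesis using p by simp
qed

lemma Wc_entry:
  fixes p :: "'k::field triple"
  assumes wf: "wf_quiver Q" and H: "p \<in> hom_var Q I d (\<lambda>x. d x + e x)" and D: "Dall Q d p \<noteq> 0"
    and a: "a < narrs Q" and i: "i < d (tgt Q a) + e (tgt Q a)" and j: "j < d (src Q a)"
  shows "Wcm Q d e p a $$ (i,j) = (if i < d (tgt Q a) then fst p a $$ (i,j) else 0)"
proof -
  have Va: "fst p a \<in> carrier_mat (d (tgt Q a)) (d (src Q a))" using H a by (auto simp: hom_var_def is_rep_def)
  have "Wcm Q d e p a $$ (i,j) = (Wcm Q d e p a * stdm d e (src Q a)) $$ (i,j)"
    using mult_std[where M="Wcm Q d e p a" and n="d (tgt Q a) + e (tgt Q a)" and d=d and e=e and x="src Q a" and i=i and j=j] i j by simp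
  also have "\<dots> = (stdm d e (tgt Q a) * fst p a) $$ (i,j)" by (simp add: Wc_std[OF wf H D a])
  also have "\<dots> = (if i < d (tgt Q a) then fst p a $$ (i,j) else 0)" by (rule std_mult[where d=d and e=e and x="tgt Q a", OF Va i j])
  finally show ?thesis .
qed


lemma Um_carrier[simp]: "Um Q d e p a \<in> carrier_mat (e (tgt Q a)) (e (src Q a))" by (simp add: Um_def)
lemma Zm_carrier[simp]: "Zm Q d e p a \<in> carrier_mat (d (tgt Q a)) (e (src Q a))" by (simp add: Zm_def)

lemma block_eq:
  fixes p :: "'k::field triple"
  assumes wf: "wf_quiver Q" and H: "p \<in> hom_var Q I d (\<lambda>x. d x + e x)" and D: "Dall Q d p \<noteq> 0"
    and a: "a < narrs Q"
  shows "block_rep Q e d (fst p) (Zm Q d e p) (Um Q d e p) a = Wcm Q d e p a"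
proof -
  let ?s = "src Q a" and ?t = "tgt Q a"
  have Va: "fst p a \<in> carrier_mat (d ?t) (d ?s)" using H a by (auto simp: hom_var_def is_rep_def)
  show ?thesis
  proof (rule eq_matI)
    fix i j assume "i < dim_row (Wcm Q d e p a)" "j < dim_col (Wcm Q d e p a)"
    then have i: "i < d ?t + e ?t" and j: "j < d ?s + e ?s" using Wcm_carrier[of Q d e p a] by auto
    have "block_rep Q e d (fst p) (Zm Q d e p) (Um Q d e p) a $$ (i,j)
      = (if i < d ?t then if j < d ?s then fst p a $$ (i,j) else Zm Q d e p a $$ (i, j - d ?s)
         else if j < d ?s then 0\<^sub>m (e ?t) (d ?s) $$ (i - d ?t, j) else Um Q d e p a $$ (i - d ?t, j - d ?s))"
    proof -
      have "dim_row (Um Q d e p a) = e ?t" "dim_col (Um Q d e p a) = e ?s" by (simp_all add: Um_def)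
      then show ?thesis unfolding block_rep_def using Va i j by (subst index_mat_four_block(1)) auto
    qed
    also have "\<dots> = Wcm Q d e p a $$ (i,j)"
    proof (cases "i < d ?t"; cases "j < d ?s")
      assume "i < d ?t" "j < d ?s"
      then show ?thesis using Wc_entry[OF wf H D a i] by simp
    next
      assume "i < d ?t" "\<not> j < d ?s"
      then show ?thesis using j by (simp add: Zm_def)
    next
      assume "\<not> i < d ?t" "j < d ?s"
      then show ?thesis using Wc_entry[OF wf H D a i] i by simp
    next
      assume "\<not> i < d ?t" "\<not> j < d ?s"
      then show ?thesis using i j by (simp add: Um_def)
    qed
    finally show "block_rep Q e d (fst p) (Zm Q d e p) (Um Q d e p) a $$ (i,j) = Wcm Q d e p a $$ (i,j)" .
  next
    show "dim_row (block_rep Q e d (fst p) (Zm Q d e p) (Um Q d e p) a) = dim_row (Wcm Q d e p a)"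
      using carrier_matD[OF Va] carrier_matD[OF Wcm_carrier[of Q d e p a]] carrier_matD[OF Um_carrier[of Q d e p a]]
      by (simp add: block_rep_def)
  next
    show "dim_col (block_rep Q e d (fst p) (Zm Q d e p) (Um Q d e p) a) = dim_col (Wcm Q d e p a)"
      using carrier_matD[OF Va] carrier_matD[OF Wcm_carrier[of Q d e p a]] carrier_matD[OF Um_carrier[of Q d e p a]]
      by (simp add: block_rep_def)
  qed
qed

lemma psi_in_E:
  fixes p :: "'k::field triple"
  assumes adm: "admissible Q I" and wf: "wf_quiver Q" and H: "p \<in> hom_var Q I d (\<lambda>x. d x + e x)" and D: "Dall Q d p \<noteq> 0"
  shows "psi Q d e p \<in> ext_var Q I e d"
proof -
  have Vrep: "is_rep Q I d (fst p)" and Wrep: "is_rep Q I (\<lambda>x. d x + e x) (fst (snd p))"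
    using H by (auto simp: hom_var_def)
  have Wc: "fst (snd p) a \<in> carrier_mat (d (tgt Q a) + e (tgt Q a)) (d (src Q a) + e (src Q a))" if "a < narrs Q" for a
    using Wrep that by (auto simp: is_rep_def)
  have relWc: "satisfies_rels Q I (\<lambda>x. d x + e x) (Wcm Q d e p)"
  proof (rule rels_conj[OF adm wf _ Wc])
    show "satisfies_rels Q I (\<lambda>x. d x + e x) (fst (snd p))" using Wrep by (simp add: is_rep_def)
  next
    fix y assume "y < nverts Q"
    then have "Dxm d p y \<noteq> 0" by (rule Dall_nz[OF D])
    then show "Gim d e p y * Gm d e p y = 1\<^sub>m (d y + e y)" "Gm d e p y * Gim d e p y = 1\<^sub>m (d y + e y)"
      using Gim_Gm[of d p y e] by auto
  next
    fix a assume a: "a < narrs Q"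
    have "Wtm Q d e p a = fst (snd p) a" using Wc[OF a] by (intro eq_matI) (auto simp: Wtm_def)
    then show "Wcm Q d e p a = Gim d e p (tgt Q a) * fst (snd p) a * Gm d e p (src Q a)"
      by (simp add: Wcm_def)
  qed auto
  have relB: "satisfies_rels Q I (\<lambda>x. d x + e x) (block_rep Q e d (fst p) (Zm Q d e p) (Um Q d e p))"
    by (rule rels_cong[OF adm relWc]) (use block_eq[OF wf H D] in simp)
  have Vc: "\<And>a. a < narrs Q \<Longrightarrow> fst p a \<in> carrier_mat (d (tgt Q a)) (d (src Q a))"
    using Vrep by (auto simp: is_rep_def)
  have relU: "satisfies_rels Q I e (Um Q d e p)"
    by (rule rels_U[OF adm relB Vc]) simp_all
  show ?thesis unfolding ext_var_def psi_def using Vrep relU relB by (auto simp: is_rep_def)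
qed


definition liftm :: "quiver \<Rightarrow> (nat \<Rightarrow> nat) \<Rightarrow> (nat \<Rightarrow> nat) \<Rightarrow> 'k::field triple \<Rightarrow> 'k triple" where
  "liftm Q d e x = (fst (snd x), block_rep Q e d (fst (snd x)) (snd (snd x)) (fst x), stdm d e)"

lemma lift_in_H:
  fixes x :: "'k::field triple"
  assumes E: "x \<in> ext_var Q I e d"
  shows "liftm Q d e x \<in> hom_var Q I d (\<lambda>x. d x + e x)"
proof -
  obtain U V Z where x: "x = (U, V, Z)" by (cases x) auto
  have Urep: "is_rep Q I e U" and Vrep: "is_rep Q I d V" and rel: "satisfies_rels Q I (\<lambda>x. d x + e x) (block_rep Q e d V Z U)"
    using E x by (auto simp: ext_var_def)
  have Vc: "V a \<in> carrier_mat (d (tgt Q a)) (d (src Q a))" if "a < narrs Q" for a using Vrep that by (auto simp: is_rep_def)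
  have Uc: "U a \<in> carrier_mat (e (tgt Q a)) (e (src Q a))" if "a < narrs Q" for a using Urep that by (auto simp: is_rep_def)
  have Bc: "block_rep Q e d V Z U a \<in> carrier_mat (d (tgt Q a) + e (tgt Q a)) (d (src Q a) + e (src Q a))"
    if a: "a < narrs Q" for a
    unfolding block_rep_def by (rule four_block_carrier_mat[OF Vc[OF a] Uc[OF a]])
  have comm: "block_rep Q e d V Z U a * stdm d e (src Q a) = stdm d e (tgt Q a) * V a" if a: "a < narrs Q" for a
  proof (rule eq_matI)
    fix i j assume "i < dim_row (stdm d e (tgt Q a) * V a)" "j < dim_col (stdm d e (tgt Q a) * V a)"
    then have i: "i < d (tgt Q a) + e (tgt Q a)" and j: "j < d (src Q a)" using Vc[OF a] by (auto simp: stdm_def)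
    have "(block_rep Q e d V Z U a * stdm d e (src Q a)) $$ (i,j) = block_rep Q e d V Z U a $$ (i,j)"
      by (rule mult_std[where d=d and e=e and x="src Q a", OF Bc[OF a] i j])
    also have "\<dots> = (if i < d (tgt Q a) then V a $$ (i,j) else 0)"
      unfolding block_rep_def using Vc[OF a] Uc[OF a] i j by (subst index_mat_four_block(1)) auto
    also have "\<dots> = (stdm d e (tgt Q a) * V a) $$ (i,j)"
      by (rule std_mult[where d=d and e=e and x="tgt Q a", OF Vc[OF a] i j, symmetric])
    finally show "(block_rep Q e d V Z U a * stdm d e (src Q a)) $$ (i,j) = (stdm d e (tgt Q a) * V a) $$ (i,j)" .
  qed (use Vc[OF a] Bc[OF a] in \<open>auto simp: stdm_def\<close>)
  show ?thesis unfolding liftm_def hom_var_def x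
    using Vrep rel Bc comm by (auto simp: is_rep_def)
qed

lemma F1m_lift: "F1m d (liftm Q d e x) y = 1\<^sub>m (d y)"
  by (rule eq_matI) (auto simp: F1m_def liftm_def stdm_def)

lemma F2m_lift: "F2m d e (liftm Q d e x) y = 0\<^sub>m (e y) (d y)"
  by (rule eq_matI) (auto simp: F2m_def liftm_def stdm_def)

lemma Dxm_lift: "Dxm d (liftm Q d e x) y = 1"
  by (simp add: Dxm_def F1m_lift)

lemma Dall_lift: "Dall Q d (liftm Q d e x) = 1"
  by (simp add: Dall_def Dxm_lift)

lemma Gm_lift: "Gm d e (liftm Q d e x) y = 1\<^sub>m (d y + e y)"
  by (simp add: Gm_def F1m_lift F2m_lift)

lemma Gim_lift: "Gim d e (liftm Q d e x) y = 1\<^sub>m (d y + e y)"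
proof -
  have "Gim d e (liftm Q d e x) y * Gm d e (liftm Q d e x) y = 1\<^sub>m (d y + e y)"
    by (rule Gim_Gm(1)) (simp add: Dxm_lift)
  then show ?thesis unfolding Gm_lift using right_mult_one_mat[OF Gim_carrier[of d e "liftm Q d e x" y]] by simp
qed

lemma Wcm_lift:
  assumes E: "x \<in> ext_var Q I e d" and a: "a < narrs Q"
  shows "Wcm Q d e (liftm Q d e x) a = block_rep Q e d (fst (snd x)) (snd (snd x)) (fst x) a"
proof -
  have H: "liftm Q d e x \<in> hom_var Q I d (\<lambda>x. d x + e x)" by (rule lift_in_H[OF E])
  have Bc: "fst (snd (liftm Q d e x)) a \<in> carrier_mat (d (tgt Q a) + e (tgt Q a)) (d (src Q a) + e (src Q a))"
    using H a by (auto simp: hom_var_def is_rep_def)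
  have Wt: "Wtm Q d e (liftm Q d e x) a = fst (snd (liftm Q d e x)) a" using Bc by (intro eq_matI) (auto simp: Wtm_def)
  show ?thesis unfolding Wcm_def Gim_lift Gm_lift Wt using Bc by (simp add: liftm_def)
qed

lemma psi_lift_coords:
  assumes E: "x \<in> ext_var Q I e d" and c: "c \<in> ext_coords Q e d"
  shows "c (psi Q d e (liftm Q d e x)) = c x"
proof -
  obtain U V Z where x: "x = (U, V, Z)" by (cases x) auto
  have Urep: "is_rep Q I e U" and Vrep: "is_rep Q I d V"
    using E x by (auto simp: ext_var_def)
  have Vc: "V a \<in> carrier_mat (d (tgt Q a)) (d (src Q a))" if "a < narrs Q" for a using Vrep that by (auto simp: is_rep_def)
  have Uc: "U a \<in> carrier_mat (e (tgt Q a)) (e (src Q a))" if "a < narrs Q" for a using Urep that by (auto simp: is_rep_def)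
  from c consider
    (U) a i j where "c = (\<lambda>P. fst P a $$ (i,j))" "a < narrs Q" "i < e (tgt Q a)" "j < e (src Q a)"
  | (V) a i j where "c = (\<lambda>P. (fst \<circ> snd) P a $$ (i,j))" "a < narrs Q" "i < d (tgt Q a)" "j < d (src Q a)"
  | (Z) a i j where "c = (\<lambda>P. (snd \<circ> snd) P a $$ (i,j))" "a < narrs Q" "i < d (tgt Q a)" "j < e (src Q a)"
    unfolding ext_coords_def arrow_coords_def by blast
  then show ?thesis
  proof cases
    case U
    have "Um Q d e (liftm Q d e x) a $$ (i,j) = Wcm Q d e (liftm Q d e x) a $$ (d (tgt Q a) + i, d (src Q a) + j)"
      using U by (simp add: Um_def)
    also have "\<dots> = block_rep Q e d V Z U a $$ (d (tgt Q a) + i, d (src Q a) + j)"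
      using Wcm_lift[OF E U(2)] x by simp
    also have "\<dots> = U a $$ (i,j)"
      unfolding block_rep_def using U Vc[OF U(2)] Uc[OF U(2)]
      by (subst index_mat_four_block(1)) auto
    finally show ?thesis using U x by (simp add: psi_def)
  next
    case V
    then show ?thesis using x by (simp add: psi_def liftm_def)
  next
    case Z
    have "Zm Q d e (liftm Q d e x) a $$ (i,j) = Wcm Q d e (liftm Q d e x) a $$ (i, d (src Q a) + j)"
      using Z by (simp add: Zm_def)
    also have "\<dots> = block_rep Q e d V Z U a $$ (i, d (src Q a) + j)"
      using Wcm_lift[OF E Z(2)] x by simp
    also have "\<dots> = Z a $$ (i,j)"
      unfolding block_rep_def using Z Vc[OF Z(2)] Uc[OF Z(2)]
      by (subst index_mat_four_block(1)) auto
    finally show ?thesis using Z x by (simp add: psi_def)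
  qed
qed


lemma hc_V:
  assumes "a < narrs Q" "i < d (tgt Q a)" "j < d (src Q a)"
  shows "(\<lambda>p::'k::field triple. fst p a $$ (i,j)) \<in> poly_funs (hom_coords Q d (\<lambda>x. d x + e x))"
proof (rule poly_funs.coord)
  show "(\<lambda>p::'k::field triple. fst p a $$ (i,j)) \<in> hom_coords Q d (\<lambda>x. d x + e x)"
    unfolding hom_coords_def arrow_coords_def using assms by blast
qed

lemma hc_W:
  assumes "a < narrs Q" "i < d (tgt Q a) + e (tgt Q a)" "j < d (src Q a) + e (src Q a)"
  shows "(\<lambda>p::'k::field triple. fst (snd p) a $$ (i,j)) \<in> poly_funs (hom_coords Q d (\<lambda>x. d x + e x))"
proof (rule poly_funs.coord)
  have "(\<lambda>p::'k::field triple. (fst \<circ> snd) p a $$ (i,j)) \<in> arrow_coords Q (\<lambda>x. d x + e x) (\<lambda>x. d x + e x) (fst \<circ> snd)"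
    unfolding arrow_coords_def using assms by blast
  then show "(\<lambda>p::'k::field triple. fst (snd p) a $$ (i,j)) \<in> hom_coords Q d (\<lambda>x. d x + e x)"
    unfolding hom_coords_def by simp
qed

lemma hc_f:
  assumes "x < nverts Q" "i < d x + e x" "j < d x"
  shows "(\<lambda>p::'k::field triple. snd (snd p) x $$ (i,j)) \<in> poly_funs (hom_coords Q d (\<lambda>x. d x + e x))"
proof (rule poly_funs.coord)
  have "(\<lambda>p::'k::field triple. (snd \<circ> snd) p x $$ (i,j)) \<in> vertex_coords Q (\<lambda>x. d x + e x) d (snd \<circ> snd)"
    unfolding vertex_coords_def using assms by blast
  then show "(\<lambda>p::'k::field triple. snd (snd p) x $$ (i,j)) \<in> hom_coords Q d (\<lambda>x. d x + e x)"
    unfolding hom_coords_def by simp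
qed

lemma pm_F1:
  assumes "x < nverts Q"
  shows "pm (hom_coords Q d (\<lambda>x. d x + e x)) (d x) (d x) (\<lambda>p::'k::field triple. F1m d p x)"
  unfolding F1m_def by (rule pm_mat) (rule hc_f[OF assms], auto)

lemma pm_F2:
  assumes "x < nverts Q"
  shows "pm (hom_coords Q d (\<lambda>x. d x + e x)) (e x) (d x) (\<lambda>p::'k::field triple. F2m d e p x)"
  unfolding F2m_def by (rule pm_mat) (rule hc_f[OF assms], auto)

lemma pf_Dx:
  assumes "x < nverts Q"
  shows "(\<lambda>p::'k::field triple. Dxm d p x) \<in> poly_funs (hom_coords Q d (\<lambda>x. d x + e x))"
  unfolding Dxm_def by (rule pm_det[OF pm_F1[OF assms]])

lemma pm_G:
  assumes "x < nverts Q"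
  shows "pm (hom_coords Q d (\<lambda>x. d x + e x)) (d x + e x) (d x + e x) (\<lambda>p::'k::field triple. Gm d e p x)"
  unfolding Gm_def by (rule pm_four_block[OF pm_F1[OF assms] pm_zero pm_F2[OF assms] pm_one])

lemma pm_Gh:
  assumes "x < nverts Q"
  shows "pm (hom_coords Q d (\<lambda>x. d x + e x)) (d x + e x) (d x + e x) (\<lambda>p::'k::field triple. Ghm d e p x)"
  unfolding Ghm_def
  by (rule pm_four_block[OF pm_adj[OF pm_F1[OF assms]] pm_zero
        pm_uminus[OF pm_mult[OF pm_F2[OF assms] pm_adj[OF pm_F1[OF assms]]]]
        pm_smult[OF pm_one pf_Dx[OF assms]]])

lemma pm_Wt:
  assumes "a < narrs Q"
  shows "pm (hom_coords Q d (\<lambda>x. d x + e x)) (d (tgt Q a) + e (tgt Q a)) (d (src Q a) + e (src Q a)) (\<lambda>p::'k::field triple. Wtm Q d e p a)"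
  unfolding Wtm_def by (rule pm_mat) (rule hc_W[OF assms], auto)

lemma pf_Dall:
  "(\<lambda>p::'k::field triple. Dall Q d p) \<in> poly_funs (hom_coords Q d (\<lambda>x. d x + e x))"
  unfolding Dall_def by (rule pf_prod) (auto intro: pf_Dx)

lemma Wc_poly:
  assumes wf: "wf_quiver Q" and a: "a < narrs Q" and i: "i < d (tgt Q a) + e (tgt Q a)" and j: "j < d (src Q a) + e (src Q a)"
  shows "\<exists>P\<in>poly_funs (hom_coords Q d (\<lambda>x. d x + e x)). \<forall>p::'k::field triple. Dall Q d p \<noteq> 0 \<longrightarrow> P p = Dall Q d p * Wcm Q d e p a $$ (i,j)"
proof -
  let ?s = "src Q a" and ?t = "tgt Q a"
  have st: "?s < nverts Q" "?t < nverts Q" using wf a by (auto simp: wf_quiver_def)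
  let ?R = "\<lambda>p::'k triple. \<Prod>x\<in>{..<nverts Q} - {?t}. Dxm d p x"
  let ?P = "\<lambda>p::'k triple. ?R p * (Ghm d e p ?t * Wtm Q d e p a * Gm d e p ?s) $$ (i,j)"
  have mem: "?P \<in> poly_funs (hom_coords Q d (\<lambda>x. d x + e x))"
  proof (rule poly_funs.mult)
    show "?R \<in> poly_funs (hom_coords Q d (\<lambda>x. d x + e x))" by (rule pf_prod) (auto intro: pf_Dx)
    show "(\<lambda>p. (Ghm d e p ?t * Wtm Q d e p a * Gm d e p ?s) $$ (i,j)) \<in> poly_funs (hom_coords Q d (\<lambda>x. d x + e x))"
      by (rule pmD(1)[OF pm_mult[OF pm_mult[OF pm_Gh[OF st(2)] pm_Wt[OF a]] pm_G[OF st(1)]] i j])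
  qed
  have prp: "\<forall>p. Dall Q d p \<noteq> 0 \<longrightarrow> ?P p = Dall Q d p * Wcm Q d e p a $$ (i,j)"
  proof (intro allI impI)
    fix p :: "'k triple" assume D: "Dall Q d p \<noteq> 0"
    have Dt: "Dxm d p ?t \<noteq> 0" by (rule Dall_nz[OF D st(2)])
    have Dsplit: "Dall Q d p = Dxm d p ?t * ?R p" unfolding Dall_def
      by (rule prod.remove) (use st in auto)
    have cGh: "Ghm d e p ?t \<in> carrier_mat (d ?t + e ?t) (d ?t + e ?t)" by simp
    have cWt: "Wtm Q d e p a \<in> carrier_mat (d ?t + e ?t) (d ?s + e ?s)" by simp
    have cG: "Gm d e p ?s \<in> carrier_mat (d ?s + e ?s) (d ?s + e ?s)" by simp
    have "Wcm Q d e p a = ((1 / Dxm d p ?t) \<cdot>\<^sub>m Ghm d e p ?t) * Wtm Q d e p a * Gm d e p ?s"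
      by (simp add: Wcm_def Gim_def)
    also have "((1 / Dxm d p ?t) \<cdot>\<^sub>m Ghm d e p ?t) * Wtm Q d e p a = (1 / Dxm d p ?t) \<cdot>\<^sub>m (Ghm d e p ?t * Wtm Q d e p a)"
      by (rule mult_smult_assoc_mat[OF cGh cWt])
    also have "\<dots> * Gm d e p ?s = (1 / Dxm d p ?t) \<cdot>\<^sub>m (Ghm d e p ?t * Wtm Q d e p a * Gm d e p ?s)"
      by (rule mult_smult_assoc_mat[OF mult_carrier_mat[OF cGh cWt] cG])
    finally have "Wcm Q d e p a $$ (i,j) = (1 / Dxm d p ?t) * (Ghm d e p ?t * Wtm Q d e p a * Gm d e p ?s) $$ (i,j)"
      using i j carrier_matD[OF cGh] carrier_matD[OF cG] by (simp del: assoc_mult_mat)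
    then show "?P p = Dall Q d p * Wcm Q d e p a $$ (i,j)"
      unfolding Dsplit using Dt by (simp add: field_simps)
  qed
  show ?thesis
  proof (rule bexI[of _ ?P])
    show "?P \<in> poly_funs (hom_coords Q d (\<lambda>x. d x + e x))" by (rule mem)
  qed (use prp in simp)
qed

lemma poly_coord:
  assumes wf: "wf_quiver Q" and c: "c \<in> ext_coords Q e d"
  shows "\<exists>P\<in>poly_funs (hom_coords Q d (\<lambda>x. d x + e x)). \<forall>p::'k::field triple. Dall Q d p \<noteq> 0 \<longrightarrow> P p = Dall Q d p * c (psi Q d e p)"
proof -
  from c consider
    (U) a i j where "c = (\<lambda>P. fst P a $$ (i,j))" "a < narrs Q" "i < e (tgt Q a)" "j < e (src Q a)"
  | (V) a i j where "c = (\<lambda>P. (fst \<circ> snd) P a $$ (i,j))" "a < narrs Q" "i < d (tgt Q a)" "j < d (src Q a)"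
  | (Z) a i j where "c = (\<lambda>P. (snd \<circ> snd) P a $$ (i,j))" "a < narrs Q" "i < d (tgt Q a)" "j < e (src Q a)"
    unfolding ext_coords_def arrow_coords_def by blast
  then show ?thesis
  proof cases
    case U
    obtain P where P: "P \<in> poly_funs (hom_coords Q d (\<lambda>x. d x + e x))"
      "\<forall>p::'k triple. Dall Q d p \<noteq> 0 \<longrightarrow> P p = Dall Q d p * Wcm Q d e p a $$ (d (tgt Q a) + i, d (src Q a) + j)"
      using Wc_poly[OF wf U(2), where d=d and e=e and i="d (tgt Q a) + i" and j="d (src Q a) + j"] U by auto
    have "\<forall>p::'k triple. Dall Q d p \<noteq> 0 \<longrightarrow> P p = Dall Q d p * c (psi Q d e p)"
      using P(2) U by (simp add: psi_def Um_def)
    then show ?thesis using P(1) by blast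
  next
    case V
    have mem: "(\<lambda>p::'k triple. Dall Q d p * fst p a $$ (i,j)) \<in> poly_funs (hom_coords Q d (\<lambda>x. d x + e x))"
      by (rule poly_funs.mult[OF pf_Dall hc_V[OF V(2-4)]])
    have prp: "\<forall>p::'k triple. Dall Q d p \<noteq> 0 \<longrightarrow> Dall Q d p * fst p a $$ (i,j) = Dall Q d p * c (psi Q d e p)"
      using V by (simp add: psi_def)
    show ?thesis
    proof (rule bexI[of _ "\<lambda>p::'k triple. Dall Q d p * fst p a $$ (i,j)"])
      show "(\<lambda>p::'k triple. Dall Q d p * fst p a $$ (i,j)) \<in> poly_funs (hom_coords Q d (\<lambda>x. d x + e x))" by (rule mem)
    qed (use prp in simp)
  next
    case Z
    obtain P where P: "P \<in> poly_funs (hom_coords Q d (\<lambda>x. d x + e x))"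
      "\<forall>p::'k triple. Dall Q d p \<noteq> 0 \<longrightarrow> P p = Dall Q d p * Wcm Q d e p a $$ (i, d (src Q a) + j)"
      using Wc_poly[OF wf Z(2), where d=d and e=e and i=i and j="d (src Q a) + j"] Z by auto
    have "\<forall>p::'k triple. Dall Q d p \<noteq> 0 \<longrightarrow> P p = Dall Q d p * c (psi Q d e p)"
      using P(2) Z by (simp add: psi_def Zm_def)
    then show ?thesis using P(1) by blast
  qed
qed


lemma E_nonempty:
  assumes adm: "admissible Q I"
  shows "((\<lambda>a. 0\<^sub>m (e (tgt Q a)) (e (src Q a))), (\<lambda>a. 0\<^sub>m (d (tgt Q a)) (d (src Q a))), (\<lambda>a. 0\<^sub>m (d (tgt Q a)) (e (src Q a))))
     \<in> (ext_var Q I e d :: 'k::field triple set)"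
proof -
  have "block_rep Q e d (\<lambda>a. 0\<^sub>m (d (tgt Q a)) (d (src Q a))) (\<lambda>a. 0\<^sub>m (d (tgt Q a)) (e (src Q a))) (\<lambda>a. 0\<^sub>m (e (tgt Q a)) (e (src Q a)))
     = (\<lambda>a. (0\<^sub>m (d (tgt Q a) + e (tgt Q a)) (d (src Q a) + e (src Q a)) :: 'k mat))"
    by (simp add: block_rep_def)
  moreover have "is_rep Q I (\<lambda>x. d x + e x) (\<lambda>a. (0\<^sub>m (d (tgt Q a) + e (tgt Q a)) (d (src Q a) + e (src Q a)) :: 'k mat))"
    using zero_rep[OF adm, where D="\<lambda>x. d x + e x"] by simp
  ultimately show ?thesis unfolding ext_var_def
    using zero_rep[OF adm, where D=d] zero_rep[OF adm, where D=e] by (auto simp: is_rep_def)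
qed

theorem main_thm:
  fixes Q :: quiver and I :: "(path \<Rightarrow> 'k::field) set"
  assumes wf: "wf_quiver Q"
    and adm: "admissible Q I"
    and hirr: "hom_irreducible Q I"
  shows "ext_irreducible Q I"
  unfolding ext_irreducible_def
proof (intro allI)
  fix e d :: "nat \<Rightarrow> nat"
  let ?HC = "hom_coords Q d (\<lambda>x. d x + e x) :: ('k triple \<Rightarrow> 'k) set"
  let ?EC = "ext_coords Q e d :: ('k triple \<Rightarrow> 'k) set"
  let ?H = "hom_var Q I d (\<lambda>x. d x + e x)"
  let ?E = "ext_var Q I e d"
  have Hirr: "irreducible_var ?HC ?H" using hirr unfolding hom_irreducible_def by blast
  define PB where "PB g = (SOME P. P \<in> poly_funs ?HC \<and> (\<exists>n. \<forall>p. Dall Q d p \<noteq> 0 \<longrightarrow> P p = Dall Q d p ^ n * g (psi Q d e p)))"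
    for g :: "'k triple \<Rightarrow> 'k"
  have PB: "PB g \<in> poly_funs ?HC \<and> (\<exists>n. \<forall>p. Dall Q d p \<noteq> 0 \<longrightarrow> PB g p = Dall Q d p ^ n * g (psi Q d e p))"
    if g: "g \<in> poly_funs ?EC" for g
  proof -
    have "\<exists>n. \<exists>P\<in>poly_funs ?HC. \<forall>p. Dall Q d p \<noteq> 0 \<longrightarrow> P p = Dall Q d p ^ n * g (psi Q d e p)"
      by (rule pf_pullback[OF g poly_coord[OF wf] pf_Dall])
    then have "\<exists>P. P \<in> poly_funs ?HC \<and> (\<exists>n. \<forall>p. Dall Q d p \<noteq> 0 \<longrightarrow> P p = Dall Q d p ^ n * g (psi Q d e p))"
      by blast
    then show ?thesis unfolding PB_def by (rule someI_ex)
  qed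
  define Z' where "Z' A = {p. \<forall>g\<in>A. Dall Q d p * PB g p = 0}" for A :: "('k triple \<Rightarrow> 'k) set"
  have closed: "zariski_closed ?HC (Z' A)" if A: "A \<subseteq> poly_funs ?EC" for A
    unfolding zariski_closed_def
  proof (intro exI conjI)
    show "(\<lambda>g p. Dall Q d p * PB g p) ` A \<subseteq> poly_funs ?HC"
      using PB A by (auto intro!: poly_funs.mult pf_Dall)
    show "Z' A = {p. \<forall>G\<in>(\<lambda>g p. Dall Q d p * PB g p) ` A. G p = 0}"
      unfolding Z'_def by auto
  qed
  have key: "p \<in> Z' A \<longleftrightarrow> (\<forall>g\<in>A. g (psi Q d e p) = 0)"
    if A: "A \<subseteq> poly_funs ?EC" and D: "Dall Q d p \<noteq> 0" for A p
  proof -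
    have "Dall Q d p * PB g p = 0 \<longleftrightarrow> g (psi Q d e p) = 0" if g: "g \<in> A" for g
    proof -
      obtain n where n: "\<forall>p. Dall Q d p \<noteq> 0 \<longrightarrow> PB g p = Dall Q d p ^ n * g (psi Q d e p)"
        using PB[of g] g A by blast
      show ?thesis using n[rule_format, OF D] D by simp
    qed
    then show ?thesis unfolding Z'_def by auto
  qed
  show "irreducible_var ?EC ?E"
    unfolding irreducible_var_def
  proof (intro conjI allI impI)
    show "?E \<noteq> {}" using E_nonempty[OF adm, where d=d and e=e] by blast
  next
    fix Z1 Z2 :: "'k triple set"
    assume asm: "zariski_closed ?EC Z1 \<and> zariski_closed ?EC Z2 \<and> ?E \<subseteq> Z1 \<union> Z2"
    obtain A1 where A1: "A1 \<subseteq> poly_funs ?EC" "Z1 = {x. \<forall>g\<in>A1. g x = 0}"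
      using asm unfolding zariski_closed_def by blast
    obtain A2 where A2: "A2 \<subseteq> poly_funs ?EC" "Z2 = {x. \<forall>g\<in>A2. g x = 0}"
      using asm unfolding zariski_closed_def by blast
    have cover: "?H \<subseteq> Z' A1 \<union> Z' A2"
    proof
      fix p assume p: "p \<in> ?H"
      show "p \<in> Z' A1 \<union> Z' A2"
      proof (cases "Dall Q d p = 0")
        case True
        then show ?thesis unfolding Z'_def by simp
      next
        case False
        have "psi Q d e p \<in> ?E" by (rule psi_in_E[OF adm wf p False])
        then have "psi Q d e p \<in> Z1 \<union> Z2" using asm by blast
        then show ?thesis using key[OF A1(1) False] key[OF A2(1) False] A1(2) A2(2) by auto
      qed
    qed
    have transfer: "?E \<subseteq> {x. \<forall>g\<in>A. g x = 0}" if A: "A \<subseteq> poly_funs ?EC" and HA: "?H \<subseteq> Z' A" for A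
    proof
      fix x assume x: "x \<in> ?E"
      have L: "liftm Q d e x \<in> ?H" by (rule lift_in_H[OF x])
      have D1: "Dall Q d (liftm Q d e x) \<noteq> 0" by (simp add: Dall_lift)
      have z: "\<forall>g\<in>A. g (psi Q d e (liftm Q d e x)) = 0" using key[OF A D1] HA L by blast
      have eqg: "g (psi Q d e (liftm Q d e x)) = g x" if g: "g \<in> A" for g
        by (rule pf_coords_eq[of g ?EC]) (use g A psi_lift_coords[OF x] in auto)
      have "\<forall>g\<in>A. g x = 0"
      proof
        fix g assume g: "g \<in> A"
        have "g (psi Q d e (liftm Q d e x)) = 0" by (rule bspec[OF z g])
        then show "g x = 0" unfolding eqg[OF g] .
      qed
      then show "x \<in> {x. \<forall>g\<in>A. g x = 0}" by simp
    qed
    have "?H \<subseteq> Z' A1 \<or> ?H \<subseteq> Z' A2"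
      using Hirr closed[OF A1(1)] closed[OF A2(1)] cover unfolding irreducible_var_def by blast
    then show "?E \<subseteq> Z1 \<or> ?E \<subseteq> Z2"
      using transfer[OF A1(1)] transfer[OF A2(1)] A1(2) A2(2) by blast
  qed
qed


theorem corollary3p3:
  fixes Q :: quiver and I :: "(path \<Rightarrow> 'k::field) set"
  assumes "alg_closed TYPE('k)"
    and "wf_quiver Q"
    and "admissible Q I"
    and "hom_irreducible Q I"
  shows "ext_irreducible Q I"
  by (rule main_thm[OF assms(2) assms(3) assms(4)])

end
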